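(* Let $P$ be a reversible operad based on sets with mated species $Q$. On the graph complex, $\partial_E^2=0$.
   Context: All vector spaces over $\mathbb{Q}$. Operad based on sets: sets $P[I]$ of operations with inputs labelled by $I$ and one output; substitution $p_2\xrightarrow{y}p_1$ (output of $p_2$ into input $y$ of $p_1$), associative, relabelling-compatible, unit $u\in P[1]$; $P[I,\{z\}]$: output labelled $z$. Reversible: $r_{x,y}:P[I,\{y\}]\to P[(I\setminus\{x\})\cup\{y\},\{x\}]$ with $r_{y,x}r_{x,y}=\mathrm{id}$, $r_{x,y}r_{y,z}=r_{x,z}$, $r_{x,z}(p_2\xrightarrow{y}p_1)=p_2\xrightarrow{y}r_{x,z}(p_1)$ if $x$ is an input of $p_1$, $=r_{y,z}(p_1)\xrightarrow{y}r_{x,y}(p_2)$ if $x$ is an input of $p_2$. Mated species: $Q[K]$ is the quotient of $\bigsqcup_{I\sqcup J=K}P[I]\times P[J]$ (outputs given a common label) by $p\otimes p'=p'\otimes p$ and $(p_3\xrightarrow{y}p_2)\otimes p_1=p_3\otimes(p_1\xrightarrow{w}r_{y,w}(p_2))$; classes are matings. $\partial q/\partial a$ is the unique element of $P[K\setminus\{a\}]$ with $q=\frac{\partial q}{\partial a}\otimes u$. A $Q$-graph is a finite 1-dimensional CW complex with an element of $Q[H(v)]$ at each vertex $v$ ($H(v)$ its half-edges). Orientation: vertex ordering plus edge directions, an odd permutation or a single edge reversal negating it. $\mathcal G_k$: $\mathbb{Q}$-span of isomorphism classes of oriented $Q$-graphs with $k$ vertices modulo $(\Gamma,\sigma)=-(\Gamma,-\sigma)$.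 $\partial_E:\mathcal G_k\to\mathcal G_{k-1}$, $\partial_E(\Gamma,\sigma)=\sum_e(\Gamma/e,\sigma/e)$ over non-loop edges $e=\{h_1,h_2\}$ ($h_i$ at $v_i$ with structure $q_i$): contract $e$, new vertex structure $\frac{\partial q_1}{\partial h_1}\otimes\frac{\partial q_2}{\partial h_2}$; $\sigma/e$: representative with $e$ from vertex 1 to vertex 2, new vertex labelled 1, other labels lowered by 1, other directions kept. *)

theory Defs
  imports Complex_Main "HOL-Combinatorics.Permutations"
begin

text \<open>Labels of inputs (and half-edges) live in a type 'l; operations in a type 'o.
  op_set is the set of all operations (the disjoint union of the sets P[I]),
  op_inp p is the finite input set I of p (so P[I] = {p in op_set. op_inp p = I}),
  op_sub p2 y p1 is the substitution p2 -y-> p1 (output of p2 into input y of p1),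
  op_relab f p is the relabelling P[f] along a bijection f : op_inp p -> f ` op_inp p,
  op_unit x is the unit u relabelled to have input x (u in P[{x}]),
  op_rev x y p is r_{x,y}(p) for p in P[I,{y}] (output labelled y), x in I.\<close>

record ('l, 'o) opd =
  op_set :: "'o set"
  op_inp :: "'o \<Rightarrow> 'l set"
  op_sub :: "'o \<Rightarrow> 'l \<Rightarrow> 'o \<Rightarrow> 'o"
  op_relab :: "('l \<Rightarrow> 'l) \<Rightarrow> 'o \<Rightarrow> 'o"
  op_unit :: "'l \<Rightarrow> 'o"
  op_rev :: "'l \<Rightarrow> 'l \<Rightarrow> 'o \<Rightarrow> 'o"

definition operad_on_sets :: "('l, 'o) opd \<Rightarrow> bool" where
  "operad_on_sets P \<longleftrightarrow>
     (\<forall>p \<in> op_set P. finite (op_inp P p))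
   \<and> (\<forall>p1 \<in> op_set P. \<forall>p2 \<in> op_set P. \<forall>y.
        y \<in> op_inp P p1 \<and> op_inp P p1 \<inter> op_inp P p2 = {} \<longrightarrow>
          op_sub P p2 y p1 \<in> op_set P
        \<and> op_inp P (op_sub P p2 y p1) = (op_inp P p1 - {y}) \<union> op_inp P p2)
   \<comment> \<open>associativity, sequential form\<close>
   \<and> (\<forall>p1 \<in> op_set P. \<forall>p2 \<in> op_set P. \<forall>p3 \<in> op_set P. \<forall>y z.
        y \<in> op_inp P p1 \<and> z \<in> op_inp P p2
        \<and> op_inp P p1 \<inter> op_inp P p2 = {} \<and> op_inp P p1 \<inter> op_inp P p3 = {}
        \<and> op_inp P p2 \<inter> op_inp P p3 = {} \<longrightarrow>
          op_sub P p3 z (op_sub P p2 y p1) = op_sub P (op_sub P p3 z p2) y p1)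
   \<comment> \<open>associativity, parallel form\<close>
   \<and> (\<forall>p1 \<in> op_set P. \<forall>p2 \<in> op_set P. \<forall>p3 \<in> op_set P. \<forall>y z.
        y \<in> op_inp P p1 \<and> z \<in> op_inp P p1 \<and> y \<noteq> z
        \<and> op_inp P p1 \<inter> op_inp P p2 = {} \<and> op_inp P p1 \<inter> op_inp P p3 = {}
        \<and> op_inp P p2 \<inter> op_inp P p3 = {} \<longrightarrow>
          op_sub P p3 z (op_sub P p2 y p1) = op_sub P p2 y (op_sub P p3 z p1))
   \<comment> \<open>species structure: relabelling along bijections\<close>
   \<and> (\<forall>p \<in> op_set P. \<forall>f. inj_on f (op_inp P p) \<longrightarrow>
        op_relab P f p \<in> op_set P \<and> op_inp P (op_relab P f p) = f ` op_inp P p)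
   \<and> (\<forall>p \<in> op_set P. \<forall>f. (\<forall>x \<in> op_inp P p. f x = x) \<longrightarrow> op_relab P f p = p)
   \<and> (\<forall>p \<in> op_set P. \<forall>f g. (\<forall>x \<in> op_inp P p. f x = g x) \<longrightarrow> op_relab P f p = op_relab P g p)
   \<and> (\<forall>p \<in> op_set P. \<forall>f g. inj_on f (op_inp P p) \<and> inj_on g (f ` op_inp P p) \<longrightarrow>
        op_relab P g (op_relab P f p) = op_relab P (g \<circ> f) p)
   \<comment> \<open>substitution is compatible with relabelling\<close>
   \<and> (\<forall>p1 \<in> op_set P. \<forall>p2 \<in> op_set P. \<forall>y f.
        y \<in> op_inp P p1 \<and> op_inp P p1 \<inter> op_inp P p2 = {}
        \<and> inj_on f (op_inp P p1 \<union> op_inp P p2) \<longrightarrow>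
          op_relab P f (op_sub P p2 y p1) = op_sub P (op_relab P f p2) (f y) (op_relab P f p1))
   \<comment> \<open>unit\<close>
   \<and> (\<forall>x. op_unit P x \<in> op_set P \<and> op_inp P (op_unit P x) = {x})
   \<and> (\<forall>x f. op_relab P f (op_unit P x) = op_unit P (f x))
   \<and> (\<forall>p \<in> op_set P. \<forall>y. y \<in> op_inp P p \<longrightarrow> op_sub P (op_unit P y) y p = p)
   \<and> (\<forall>p \<in> op_set P. \<forall>y. y \<notin> op_inp P p \<longrightarrow> op_sub P p y (op_unit P y) = p)"

definition reversible :: "('l, 'o) opd \<Rightarrow> bool" where
  "reversible P \<longleftrightarrow>
     (\<forall>p \<in> op_set P. \<forall>x y. x \<in> op_inp P p \<and> y \<notin> op_inp P p \<longrightarrow>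
        op_rev P x y p \<in> op_set P \<and> op_inp P (op_rev P x y p) = (op_inp P p - {x}) \<union> {y})
   \<and> (\<forall>p \<in> op_set P. \<forall>x y. x \<in> op_inp P p \<and> y \<notin> op_inp P p \<longrightarrow>
        op_rev P y x (op_rev P x y p) = p)
   \<and> (\<forall>p \<in> op_set P. \<forall>x y z. x \<in> op_inp P p \<and> y \<in> op_inp P p \<and> x \<noteq> y \<and> z \<notin> op_inp P p \<longrightarrow>
        op_rev P x y (op_rev P y z p) = op_rev P x z p)
   \<and> (\<forall>p1 \<in> op_set P. \<forall>p2 \<in> op_set P. \<forall>x y z.
        y \<in> op_inp P p1 \<and> op_inp P p1 \<inter> op_inp P p2 = {}
        \<and> z \<notin> op_inp P p1 \<and> z \<notin> op_inp P p2 \<and> x \<in> op_inp P p1 \<and> x \<noteq> y \<longrightarrow>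
          op_rev P x z (op_sub P p2 y p1) = op_sub P p2 y (op_rev P x z p1))
   \<and> (\<forall>p1 \<in> op_set P. \<forall>p2 \<in> op_set P. \<forall>x y z.
        y \<in> op_inp P p1 \<and> op_inp P p1 \<inter> op_inp P p2 = {}
        \<and> z \<notin> op_inp P p1 \<and> z \<notin> op_inp P p2 \<and> x \<in> op_inp P p2 \<longrightarrow>
          op_rev P x z (op_sub P p2 y p1) = op_sub P (op_rev P y z p1) y (op_rev P x y p2))
   \<comment> \<open>naturality of r with respect to relabelling (r is a map of species)\<close>
   \<and> (\<forall>p \<in> op_set P. \<forall>x z f. x \<in> op_inp P p \<and> z \<notin> op_inp P p \<and> inj_on f (insert z (op_inp P p)) \<longrightarrow>
        op_relab P f (op_rev P x z p) = op_rev P (f x) (f z) (op_relab P f p))"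

text \<open>A representative of a mating is a pair (p, p'), meaning p \<otimes> p'.\<close>

definition mating_labels :: "('l, 'o) opd \<Rightarrow> 'o \<times> 'o \<Rightarrow> 'l set" where
  "mating_labels P q = op_inp P (fst q) \<union> op_inp P (snd q)"

definition mating_wf :: "('l, 'o) opd \<Rightarrow> 'l set \<Rightarrow> 'o \<times> 'o \<Rightarrow> bool" where
  "mating_wf P K q \<longleftrightarrow> fst q \<in> op_set P \<and> snd q \<in> op_set P
     \<and> op_inp P (fst q) \<inter> op_inp P (snd q) = {} \<and> mating_labels P q = K"

inductive mate_step :: "('l, 'o) opd \<Rightarrow> 'o \<times> 'o \<Rightarrow> 'o \<times> 'o \<Rightarrow> bool" for P where
  swap: "p \<in> op_set P \<Longrightarrow> p' \<in> op_set P \<Longrightarrow> op_inp P p \<inter> op_inp P p' = {} \<Longrightarrow>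
         mate_step P (p, p') (p', p)"
| move: "p1 \<in> op_set P \<Longrightarrow> p2 \<in> op_set P \<Longrightarrow> p3 \<in> op_set P \<Longrightarrow> y \<in> op_inp P p2 \<Longrightarrow>
         op_inp P p1 \<inter> op_inp P p2 = {} \<Longrightarrow> op_inp P p1 \<inter> op_inp P p3 = {} \<Longrightarrow>
         op_inp P p2 \<inter> op_inp P p3 = {} \<Longrightarrow>
         w \<notin> op_inp P p1 \<Longrightarrow> w \<notin> op_inp P p2 \<Longrightarrow> w \<notin> op_inp P p3 \<Longrightarrow>
         mate_step P (op_sub P p3 y p2, p1) (p3, op_sub P p1 w (op_rev P y w p2))"

definition mate_eq :: "('l, 'o) opd \<Rightarrow> 'o \<times> 'o \<Rightarrow> 'o \<times> 'o \<Rightarrow> bool" where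
  "mate_eq P = equivclp (mate_step P)"

definition mate_relab :: "('l, 'o) opd \<Rightarrow> ('l \<Rightarrow> 'l) \<Rightarrow> 'o \<times> 'o \<Rightarrow> 'o \<times> 'o" where
  "mate_relab P f q = (op_relab P f (fst q), op_relab P f (snd q))"

definition mate_deriv :: "('l, 'o) opd \<Rightarrow> 'o \<times> 'o \<Rightarrow> 'l \<Rightarrow> 'o" where
  "mate_deriv P q a = (THE p. p \<in> op_set P \<and> op_inp P p = mating_labels P q - {a}
                              \<and> mate_eq P q (p, op_unit P a))"

text \<open>A finite graph given by vertices, half-edges (labels), the attaching map of
  half-edges to vertices and the fixed-point-free involution pairing half-edges
  into edges; each vertex v carries a representative of a mating in Q[H(v)].\<close>

record ('v, 'l, 'o) qgraph =
  gV :: "'v set"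
  gH :: "'l set"
  gvert :: "'l \<Rightarrow> 'v"
  gopp :: "'l \<Rightarrow> 'l"
  gstr :: "'v \<Rightarrow> 'o \<times> 'o"

definition hedges_at :: "('v, 'l, 'o) qgraph \<Rightarrow> 'v \<Rightarrow> 'l set" where
  "hedges_at G v = {h \<in> gH G. gvert G h = v}"

definition is_qgraph :: "('l, 'o) opd \<Rightarrow> ('v, 'l, 'o) qgraph \<Rightarrow> bool" where
  "is_qgraph P G \<longleftrightarrow> finite (gV G) \<and> finite (gH G)
    \<and> (\<forall>h \<in> gH G. gvert G h \<in> gV G \<and> gopp G h \<in> gH G \<and> gopp G h \<noteq> h \<and> gopp G (gopp G h) = h)
    \<and> (\<forall>v \<in> gV G. mating_wf P (hedges_at G v) (gstr G v))"

text \<open>An oriented Q-graph representative: a graph, a vertex ordering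
  (bijection onto 1..k) and edge directions (the set of source half-edges,
  exactly one half-edge of each edge).\<close>

type_synonym ('v, 'l, 'o) ograph = "('v, 'l, 'o) qgraph \<times> ('v \<Rightarrow> nat) \<times> 'l set"

definition is_ograph :: "('l, 'o) opd \<Rightarrow> ('v, 'l, 'o) ograph \<Rightarrow> bool" where
  "is_ograph P g \<longleftrightarrow> (case g of (G, ord, src) \<Rightarrow>
      is_qgraph P G \<and> bij_betw ord (gV G) {1..card (gV G)} \<and> src \<subseteq> gH G
    \<and> (\<forall>h \<in> gH G. h \<in> src \<longleftrightarrow> gopp G h \<notin> src))"

definition perm_sign :: "nat \<Rightarrow> (nat \<Rightarrow> nat) \<Rightarrow> int" where
  "perm_sign k \<pi> = sign (\<lambda>i. if i \<in> {1..k} then \<pi> i else i)"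

text \<open>Isomorphism of Q-graphs (phiV on vertices, phiH on half-edges, carrying
  vertex structures to equivalent matings) together with the sign eps relating
  the two orientation representatives: sign of the induced permutation of the
  vertex orderings times (-1)^(number of reversed edges).\<close>

definition oiso :: "('l, 'o) opd \<Rightarrow> ('v, 'l, 'o) ograph \<Rightarrow> ('v, 'l, 'o) ograph
                    \<Rightarrow> ('v \<Rightarrow> 'v) \<Rightarrow> ('l \<Rightarrow> 'l) \<Rightarrow> int \<Rightarrow> bool" where
  "oiso P g g' phiV phiH eps \<longleftrightarrow> (case g of (G, ord, src) \<Rightarrow> case g' of (G', ord', src') \<Rightarrow>
      bij_betw phiV (gV G) (gV G') \<and> bij_betw phiH (gH G) (gH G')
    \<and> (\<forall>h \<in> gH G. gvert G' (phiH h) = phiV (gvert G h) \<and> gopp G' (phiH h) = phiH (gopp G h))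
    \<and> (\<forall>v \<in> gV G. mate_eq P (mate_relab P phiH (gstr G v)) (gstr G' (phiV v)))
    \<and> eps = perm_sign (card (gV G)) (\<lambda>i. ord' (phiV (inv_into (gV G) ord i)))
            * (-1) ^ card {h \<in> src. phiH h \<notin> src'})"

text \<open>Formal Q-linear combinations of oriented-graph representatives are
  finitely supported functions; the graph complex (all G_k at once) is their
  quotient by the span of the relations g = eps * g' for isomorphic
  representatives (this encodes both passing to isomorphism classes and
  (Gamma, sigma) = -(Gamma, -sigma)).\<close>

definition ind :: "'a \<Rightarrow> 'a \<Rightarrow> rat" where
  "ind g = (\<lambda>h. if h = g then 1 else 0)"

inductive_set relspan :: "('l, 'o) opd \<Rightarrow> (('v, 'l, 'o) ograph \<Rightarrow> rat) set" for P where
  zero: "(\<lambda>_. 0) \<in> relspan P"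
| add: "x \<in> relspan P \<Longrightarrow> y \<in> relspan P \<Longrightarrow> (\<lambda>g. x g + y g) \<in> relspan P"
| smult: "x \<in> relspan P \<Longrightarrow> (\<lambda>g. c * x g) \<in> relspan P"
| gen: "is_ograph P g \<Longrightarrow> is_ograph P g' \<Longrightarrow> oiso P g g' phiV phiH eps \<Longrightarrow>
        (\<lambda>h. ind g h - of_int eps * ind g' h) \<in> relspan P"

text \<open>Contraction of the non-loop edge {h, opp h}, where h is its source
  half-edge (at vertex v1) and opp h its target (at vertex v2).  The standard
  representative has v1 labelled 1, v2 labelled 2, the remaining vertices in
  their previous relative order, directions unchanged; cord_std is that
  ordering and contract_sign is the sign of passing to it.  The contracted
  vertex (named v1) is labelled 1, the others are lowered by 1; its
  structure is (dq1/dh) \<otimes> (dq2/d(opp h)).\<close>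

definition ord_std :: "('v, 'l, 'o) ograph \<Rightarrow> 'l \<Rightarrow> 'v \<Rightarrow> nat" where
  "ord_std g h = (case g of (G, ord, src) \<Rightarrow>
     (let v1 = gvert G h; v2 = gvert G (gopp G h) in
      (\<lambda>v. if v = v1 then 1 else if v = v2 then 2
           else 2 + card {w \<in> gV G - {v1, v2}. ord w \<le> ord v})))"

definition contract_sign :: "('v, 'l, 'o) ograph \<Rightarrow> 'l \<Rightarrow> int" where
  "contract_sign g h = (case g of (G, ord, src) \<Rightarrow>
     perm_sign (card (gV G)) (\<lambda>i. ord_std g h (inv_into (gV G) ord i)))"

definition contract :: "('l, 'o) opd \<Rightarrow> ('v, 'l, 'o) ograph \<Rightarrow> 'l \<Rightarrow> ('v, 'l, 'o) ograph" where
  "contract P g h = (case g of (G, ord, src) \<Rightarrow>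
     (let v1 = gvert G h; v2 = gvert G (gopp G h) in
      (\<lparr> gV = gV G - {v2},
         gH = gH G - {h, gopp G h},
         gvert = (\<lambda>x. if gvert G x = v2 then v1 else gvert G x),
         gopp = gopp G,
         gstr = (\<lambda>v. if v = v1 then (mate_deriv P (gstr G v1) h, mate_deriv P (gstr G v2) (gopp G h))
                     else gstr G v) \<rparr>,
       (\<lambda>v. if v = v1 then 1 else ord_std g h v - 1),
       src - {h})))"

definition dE_gen :: "('l, 'o) opd \<Rightarrow> ('v, 'l, 'o) ograph \<Rightarrow> ('v, 'l, 'o) ograph \<Rightarrow> rat" where
  "dE_gen P g = (case g of (G, ord, src) \<Rightarrow>
     (\<lambda>g'. \<Sum>h \<in> {h \<in> src. gvert G h \<noteq> gvert G (gopp G h)}.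
             if contract P g h = g' then of_int (contract_sign g h) else 0))"

definition dE :: "('l, 'o) opd \<Rightarrow> (('v, 'l, 'o) ograph \<Rightarrow> rat) \<Rightarrow> ('v, 'l, 'o) ograph \<Rightarrow> rat" where
  "dE P x = (\<lambda>g'. \<Sum>g \<in> {g. x g \<noteq> 0}. x g * dE_gen P g g')"

end

theory Submission
  imports Defs
begin

definition ren :: "'l \<Rightarrow> 'l \<Rightarrow> 'l \<Rightarrow> 'l" where
  "ren x z = (\<lambda>v. if v = x then z else v)"

locale ROP =
  fixes P :: "('l, 'o) opd"
  assumes infl: "infinite (UNIV :: 'l set)"
    and opd: "operad_on_sets P"
    and rvs: "reversible P"
begin

abbreviation "S \<equiv> op_set P"
abbreviation "inp \<equiv> op_inp P"
abbreviation "sub \<equiv> op_sub P"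
abbreviation "rl \<equiv> op_relab P"
abbreviation "un \<equiv> op_unit P"
abbreviation "rv \<equiv> op_rev P"

lemmas O = opd[unfolded operad_on_sets_def]
lemmas RV = rvs[unfolded reversible_def]

lemma fin: "p \<in> S \<Longrightarrow> finite (inp p)"
  using O[THEN conjunct1] by blast

lemma sub_S: "p1 \<in> S \<Longrightarrow> p2 \<in> S \<Longrightarrow> y \<in> inp p1 \<Longrightarrow> inp p1 \<inter> inp p2 = {} \<Longrightarrow> sub p2 y p1 \<in> S"
  using O[THEN conjunct2, THEN conjunct1] by blast
lemma sub_inp: "p1 \<in> S \<Longrightarrow> p2 \<in> S \<Longrightarrow> y \<in> inp p1 \<Longrightarrow> inp p1 \<inter> inp p2 = {} \<Longrightarrow>
   inp (sub p2 y p1) = (inp p1 - {y}) \<union> inp p2"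
  using O[THEN conjunct2, THEN conjunct1] by blast
lemma assoc_seq: "p1 \<in> S \<Longrightarrow> p2 \<in> S \<Longrightarrow> p3 \<in> S \<Longrightarrow> y \<in> inp p1 \<Longrightarrow> z \<in> inp p2 \<Longrightarrow>
  inp p1 \<inter> inp p2 = {} \<Longrightarrow> inp p1 \<inter> inp p3 = {} \<Longrightarrow> inp p2 \<inter> inp p3 = {} \<Longrightarrow>
  sub p3 z (sub p2 y p1) = sub (sub p3 z p2) y p1"
  using O[THEN conjunct2, THEN conjunct2, THEN conjunct1] by blast
lemma assoc_par: "p1 \<in> S \<Longrightarrow> p2 \<in> S \<Longrightarrow> p3 \<in> S \<Longrightarrow> y \<in> inp p1 \<Longrightarrow> z \<in> inp p1 \<Longrightarrow> y \<noteq> z \<Longrightarrow>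
  inp p1 \<inter> inp p2 = {} \<Longrightarrow> inp p1 \<inter> inp p3 = {} \<Longrightarrow> inp p2 \<inter> inp p3 = {} \<Longrightarrow>
  sub p3 z (sub p2 y p1) = sub p2 y (sub p3 z p1)"
  using O[THEN conjunct2, THEN conjunct2, THEN conjunct2, THEN conjunct1] by blast
lemma relab_S: "p \<in> S \<Longrightarrow> inj_on f (inp p) \<Longrightarrow> rl f p \<in> S"
  using O[THEN conjunct2, THEN conjunct2, THEN conjunct2, THEN conjunct2, THEN conjunct1] by blast
lemma relab_inp: "p \<in> S \<Longrightarrow> inj_on f (inp p) \<Longrightarrow> inp (rl f p) = f ` inp p"
  using O[THEN conjunct2, THEN conjunct2, THEN conjunct2, THEN conjunct2, THEN conjunct1] by blast
lemma relab_id: "p \<in> S \<Longrightarrow> (\<And>x. x \<in> inp p \<Longrightarrow> f x = x) \<Longrightarrow> rl f p = p"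
  using O[THEN conjunct2, THEN conjunct2, THEN conjunct2, THEN conjunct2, THEN conjunct2, THEN conjunct1] by blast
lemma relab_cong: "p \<in> S \<Longrightarrow> (\<And>x. x \<in> inp p \<Longrightarrow> f x = g x) \<Longrightarrow> rl f p = rl g p"
  using O[THEN conjunct2, THEN conjunct2, THEN conjunct2, THEN conjunct2, THEN conjunct2, THEN conjunct2, THEN conjunct1] by blast
lemma relab_comp: "p \<in> S \<Longrightarrow> inj_on f (inp p) \<Longrightarrow> inj_on g (f ` inp p) \<Longrightarrow> rl g (rl f p) = rl (g \<circ> f) p"
  using O[THEN conjunct2, THEN conjunct2, THEN conjunct2, THEN conjunct2, THEN conjunct2, THEN conjunct2, THEN conjunct2, THEN conjunct1] by blast
lemma relab_sub: "p1 \<in> S \<Longrightarrow> p2 \<in> S \<Longrightarrow> y \<in> inp p1 \<Longrightarrow> inp p1 \<inter> inp p2 = {} \<Longrightarrow>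
  inj_on f (inp p1 \<union> inp p2) \<Longrightarrow> rl f (sub p2 y p1) = sub (rl f p2) (f y) (rl f p1)"
  using O[THEN conjunct2, THEN conjunct2, THEN conjunct2, THEN conjunct2, THEN conjunct2, THEN conjunct2, THEN conjunct2, THEN conjunct2, THEN conjunct1] by blast
lemma unit_S: "un x \<in> S" and unit_inp: "inp (un x) = {x}"
  using O[THEN conjunct2, THEN conjunct2, THEN conjunct2, THEN conjunct2, THEN conjunct2, THEN conjunct2, THEN conjunct2, THEN conjunct2, THEN conjunct2, THEN conjunct1] by blast+
lemma relab_unit: "rl f (un x) = un (f x)"
  using O[THEN conjunct2, THEN conjunct2, THEN conjunct2, THEN conjunct2, THEN conjunct2, THEN conjunct2, THEN conjunct2, THEN conjunct2, THEN conjunct2, THEN conjunct2, THEN conjunct1] by blast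
lemma unit_left: "p \<in> S \<Longrightarrow> y \<in> inp p \<Longrightarrow> sub (un y) y p = p"
  using O[THEN conjunct2, THEN conjunct2, THEN conjunct2, THEN conjunct2, THEN conjunct2, THEN conjunct2, THEN conjunct2, THEN conjunct2, THEN conjunct2, THEN conjunct2, THEN conjunct2, THEN conjunct1] by blast
lemma unit_right: "p \<in> S \<Longrightarrow> y \<notin> inp p \<Longrightarrow> sub p y (un y) = p"
  using O[THEN conjunct2, THEN conjunct2, THEN conjunct2, THEN conjunct2, THEN conjunct2, THEN conjunct2, THEN conjunct2, THEN conjunct2, THEN conjunct2, THEN conjunct2, THEN conjunct2, THEN conjunct2] by blast

lemma rev_S: "p \<in> S \<Longrightarrow> x \<in> inp p \<Longrightarrow> y \<notin> inp p \<Longrightarrow> rv x y p \<in> S"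
  using RV[THEN conjunct1] by blast
lemma rev_inp: "p \<in> S \<Longrightarrow> x \<in> inp p \<Longrightarrow> y \<notin> inp p \<Longrightarrow> inp (rv x y p) = (inp p - {x}) \<union> {y}"
  using RV[THEN conjunct1] by blast
lemma rev_inv: "p \<in> S \<Longrightarrow> x \<in> inp p \<Longrightarrow> y \<notin> inp p \<Longrightarrow> rv y x (rv x y p) = p"
  using RV[THEN conjunct2, THEN conjunct1] by blast
lemma rev_chain: "p \<in> S \<Longrightarrow> x \<in> inp p \<Longrightarrow> y \<in> inp p \<Longrightarrow> x \<noteq> y \<Longrightarrow> z \<notin> inp p \<Longrightarrow>
   rv x y (rv y z p) = rv x z p"
  using RV[THEN conjunct2, THEN conjunct2, THEN conjunct1] by blast
lemma rev_sub1: "p1 \<in> S \<Longrightarrow> p2 \<in> S \<Longrightarrow> y \<in> inp p1 \<Longrightarrow> inp p1 \<inter> inp p2 = {} \<Longrightarrow>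
   z \<notin> inp p1 \<Longrightarrow> z \<notin> inp p2 \<Longrightarrow> x \<in> inp p1 \<Longrightarrow> x \<noteq> y \<Longrightarrow>
   rv x z (sub p2 y p1) = sub p2 y (rv x z p1)"
  using RV[THEN conjunct2, THEN conjunct2, THEN conjunct2, THEN conjunct1] by blast
lemma rev_sub2: "p1 \<in> S \<Longrightarrow> p2 \<in> S \<Longrightarrow> y \<in> inp p1 \<Longrightarrow> inp p1 \<inter> inp p2 = {} \<Longrightarrow>
   z \<notin> inp p1 \<Longrightarrow> z \<notin> inp p2 \<Longrightarrow> x \<in> inp p2 \<Longrightarrow>
   rv x z (sub p2 y p1) = sub (rv y z p1) y (rv x y p2)"
  using RV[THEN conjunct2, THEN conjunct2, THEN conjunct2, THEN conjunct2, THEN conjunct1] by blast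
lemma rev_nat: "p \<in> S \<Longrightarrow> x \<in> inp p \<Longrightarrow> z \<notin> inp p \<Longrightarrow> inj_on f (insert z (inp p)) \<Longrightarrow>
   rl f (rv x z p) = rv (f x) (f z) (rl f p)"
  using RV[THEN conjunct2, THEN conjunct2, THEN conjunct2, THEN conjunct2, THEN conjunct2] by blast

lemma fresh: "finite (A :: 'l set) \<Longrightarrow> \<exists>w. w \<notin> A"
proof -
  assume f: "finite A"
  have "A \<noteq> UNIV"
  proof
    assume "A = UNIV"
    then show False using f infl by simp
  qed
  then show ?thesis by auto
qed

lemma inj_ren: "z \<notin> A - {x} \<Longrightarrow> inj_on (ren x z) A"
  unfolding ren_def inj_on_def by auto

lemma revrev: assumes "p \<in> S" "x \<in> inp p" "y \<notin> inp p" "z \<notin> inp p - {x}" "z \<noteq> y"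
  shows "rv y z (rv x y p) = rl (ren x z) p"
proof -
  have xy: "x \<noteq> y" using assms by auto
  have q1: "rv x y p \<in> S" by (rule rev_S[OF assms(1-3)])
  have q2: "inp (rv x y p) = (inp p - {x}) \<union> {y}" by (rule rev_inp[OF assms(1-3)])
  have inj: "inj_on (ren x z) (insert x (inp (rv x y p)))" unfolding q2 by (rule inj_ren) (use assms in auto)
  have yi: "y \<in> inp (rv x y p)" "x \<notin> inp (rv x y p)" using q2 xy by auto
  have "rl (ren x z) (rv y x (rv x y p)) = rv (ren x z y) (ren x z x) (rl (ren x z) (rv x y p))"
    by (rule rev_nat[OF q1 yi inj])
  also have "rl (ren x z) (rv x y p) = rv x y p"
  proof (rule relab_id[OF q1])
    fix v assume "v \<in> inp (rv x y p)"
    then have "v \<noteq> x" using q2 xy by auto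
    then show "ren x z v = v" unfolding ren_def by simp
  qed
  finally show ?thesis using rev_inv[OF assms(1-3)] xy by (simp add: ren_def)
qed

lemma revI: "p \<in> S \<Longrightarrow> x \<in> inp p \<Longrightarrow> y \<notin> inp p \<Longrightarrow> rv x y p \<in> S \<and> inp (rv x y p) = inp p - {x} \<union> {y}"
  by (simp add: rev_S rev_inp)
lemma subI: "p1 \<in> S \<Longrightarrow> p2 \<in> S \<Longrightarrow> y \<in> inp p1 \<Longrightarrow> inp p1 \<inter> inp p2 = {} \<Longrightarrow>
  sub p2 y p1 \<in> S \<and> inp (sub p2 y p1) = inp p1 - {y} \<union> inp p2"
  by (simp add: sub_S sub_inp)

lemma alpha: assumes "X \<in> S" "Y \<in> S" "w \<in> inp Y" "inp X \<inter> inp Y = {}" "w' \<notin> inp X" "w' \<notin> inp Y"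
  shows "sub X w Y = sub X w' (rl (ren w w') Y)"
proof -
  have wX: "w \<notin> inp X" using assms by auto
  have inj: "inj_on (ren w w') (inp Y \<union> inp X)" by (rule inj_ren) (use assms in auto)
  have "rl (ren w w') (sub X w Y) = sub (rl (ren w w') X) (ren w w' w) (rl (ren w w') Y)"
    by (rule relab_sub[OF assms(2,1,3) _ inj]) (use assms in auto)
  moreover have "rl (ren w w') (sub X w Y) = sub X w Y"
  proof -
    have c: "sub X w Y \<in> S" "inp (sub X w Y) = (inp Y - {w}) \<union> inp X"
      using subI[OF assms(2,1,3)] assms(4) by (auto simp: Int_commute)
    show ?thesis
    proof (rule relab_id[OF c(1)])
      fix v assume "v \<in> inp (sub X w Y)"
      then have "v \<noteq> w" using c(2) wX by auto
      then show "ren w w' v = v" unfolding ren_def by simp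
    qed
  qed
  moreover have "rl (ren w w') X = X"
  proof (rule relab_id[OF assms(1)])
    fix v assume "v \<in> inp X"
    then have "v \<noteq> w" using wX by auto
    then show "ren w w' v = v" unfolding ren_def by simp
  qed
  ultimately show ?thesis by (simp add: ren_def)
qed

lemma rho: assumes "y \<noteq> z" shows "rv y z (un y) = un z"
proof -
  obtain x where x: "x \<notin> {y, z}" using fresh[of "{y,z}"] by auto
  let ?p2 = "rv y x (un y)"
  have p2: "?p2 \<in> S" "inp ?p2 = {x}" using revI[of "un y" y x] unit_S unit_inp x by auto
  have "rv x z ?p2 = rv x z (sub ?p2 y (un y))"
    using unit_right[OF p2(1)] p2 x by auto
  also have "\<dots> = sub (rv y z (un y)) y (rv x y ?p2)"
    by (rule rev_sub2[OF unit_S p2(1)]) (use p2 unit_inp x assms in auto)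
  also have "rv x y ?p2 = un y" by (rule rev_inv) (use unit_S unit_inp x in auto)
  also have "sub (rv y z (un y)) y (un y) = rv y z (un y)"
    by (rule unit_right) (use revI[of "un y" y z] unit_S unit_inp assms in auto)
  finally have e1: "rv x z ?p2 = rv y z (un y)" .
  have "rv x z ?p2 = rl (ren y z) (un y)"
    by (rule revrev) (use unit_S unit_inp x assms in auto)
  then show ?thesis using e1 relab_unit by (simp add: ren_def)
qed

lemma unit_ren: assumes "X \<in> S" "w \<in> inp X" "a \<notin> inp X"
  shows "sub (un a) w X = rl (ren w a) X"
proof -
  obtain z where z: "z \<notin> inp X \<union> {a}" using fresh[of "inp X \<union> {a}"] fin assms by auto
  have aw: "a \<noteq> w" using assms by auto
  have c: "sub (un a) w X \<in> S" "inp (sub (un a) w X) = (inp X - {w}) \<union> {a}"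
    using subI[OF assms(1) unit_S assms(2)] assms(3) unit_inp by auto
  have r: "rv w z X \<in> S" "inp (rv w z X) = inp X - {w} \<union> {z}" using revI[OF assms(1,2)] z by auto
  have "rv a z (sub (un a) w X) = sub (rv w z X) w (rv a w (un a))"
    by (rule rev_sub2[OF assms(1) unit_S assms(2)]) (use assms unit_inp z in auto)
  also have "rv a w (un a) = un w" using rho aw by auto
  also have "sub (rv w z X) w (un w) = rv w z X"
    by (rule unit_right[OF r(1)]) (use r(2) z assms in auto)
  finally have e: "rv a z (sub (un a) w X) = rv w z X" .
  have "sub (un a) w X = rv z a (rv a z (sub (un a) w X))"
    by (rule rev_inv[symmetric, OF c(1)]) (use c(2) z in auto)
  also have "\<dots> = rv z a (rv w z X)" using e by simp
  also have "\<dots> = rl (ren w a) X" by (rule revrev) (use assms z in auto)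
  finally show ?thesis .
qed

lemma Dw_props1: assumes "x \<in> S" "y \<in> S" "inp x \<inter> inp y = {}" "a \<in> inp y" "w \<notin> inp x \<union> inp y"
  shows "sub x w (rv a w y) \<in> S" "inp (sub x w (rv a w y)) = (inp x \<union> inp y) - {a}"
proof -
  have wy: "w \<notin> inp y" using assms by auto
  have r: "rv a w y \<in> S" "inp (rv a w y) = inp y - {a} \<union> {w}" using revI[OF assms(2,4) wy] by auto
  have d: "inp (rv a w y) \<inter> inp x = {}" using r(2) assms by auto
  have ww: "w \<in> inp (rv a w y)" using r(2) by auto
  show "sub x w (rv a w y) \<in> S" using subI[OF r(1) assms(1) ww d] by auto
  have "inp (sub x w (rv a w y)) = (inp (rv a w y) - {w}) \<union> inp x" using subI[OF r(1) assms(1) ww d] by auto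
  then show "inp (sub x w (rv a w y)) = (inp x \<union> inp y) - {a}" using r(2) assms by auto
qed

lemma Dw_indep1: assumes "x \<in> S" "y \<in> S" "inp x \<inter> inp y = {}" "a \<in> inp y"
   "w \<notin> inp x \<union> inp y" "w' \<notin> inp x \<union> inp y"
  shows "sub x w (rv a w y) = sub x w' (rv a w' y)"
proof (cases "w = w'")
  case False
  have wy: "w \<notin> inp y" using assms by auto
  have r: "rv a w y \<in> S" "inp (rv a w y) = inp y - {a} \<union> {w}" using revI[OF assms(2,4) wy] by auto
  have "sub x w (rv a w y) = sub x w' (rl (ren w w') (rv a w y))"
    by (rule alpha[OF assms(1) r(1)]) (use r(2) assms False in auto)
  also have "rl (ren w w') (rv a w y) = rv (ren w w' a) (ren w w' w) (rl (ren w w') y)"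
  proof (rule rev_nat[OF assms(2,4) wy])
    show "inj_on (ren w w') (insert w (inp y))" by (rule inj_ren) (use assms in auto)
  qed
  also have "rl (ren w w') y = y"
  proof (rule relab_id[OF assms(2)])
    fix v assume "v \<in> inp y"
    then have "v \<noteq> w" using wy by auto
    then show "ren w w' v = v" unfolding ren_def by simp
  qed
  finally show ?thesis using assms False wy by (auto simp: ren_def)
qed simp

definition wfq :: "'o \<times> 'o \<Rightarrow> bool" where
  "wfq q \<longleftrightarrow> fst q \<in> S \<and> snd q \<in> S \<and> inp (fst q) \<inter> inp (snd q) = {}"

abbreviation "lab \<equiv> mating_labels P"

definition Dw :: "'l \<Rightarrow> 'l \<Rightarrow> 'o \<times> 'o \<Rightarrow> 'o" where
  "Dw a w q = (if a \<in> inp (snd q) then sub (fst q) w (rv a w (snd q)) else sub (snd q) w (rv a w (fst q)))"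

definition D :: "'l \<Rightarrow> 'o \<times> 'o \<Rightarrow> 'o" where
  "D a q = Dw a (SOME w. w \<notin> lab q) q"

lemma lab_pair: "lab (x, y) = inp x \<union> inp y" unfolding mating_labels_def by simp

lemma lab_fin: "wfq q \<Longrightarrow> finite (lab q)"
  unfolding wfq_def mating_labels_def using fin by auto

lemma Dw_cases: assumes "wfq (x, y)" "a \<in> lab (x, y)" "w \<notin> lab (x, y)"
  shows "(a \<in> inp y \<and> Dw a w (x, y) = sub x w (rv a w y)) \<or> (a \<in> inp x \<and> Dw a w (x, y) = sub y w (rv a w x))"
  using assms unfolding Dw_def lab_pair by auto

lemma Dw_indep: assumes "wfq q" "a \<in> lab q" "w \<notin> lab q" "w' \<notin> lab q"
  shows "Dw a w q = Dw a w' q"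
proof -
  obtain x y where q: "q = (x, y)" by (cases q)
  have x: "x \<in> S" "y \<in> S" "inp x \<inter> inp y = {}" "inp y \<inter> inp x = {}" using assms q unfolding wfq_def by auto
  have l: "lab q = inp x \<union> inp y" using q lab_pair by auto
  have ws: "w \<notin> inp x \<union> inp y" "w' \<notin> inp x \<union> inp y" "w \<notin> inp y \<union> inp x" "w' \<notin> inp y \<union> inp x"
    using assms(3,4) l by auto
  show ?thesis
  proof (cases "a \<in> inp y")
    case True
    have "Dw a w q = sub x w (rv a w y)" "Dw a w' q = sub x w' (rv a w' y)" unfolding q Dw_def using True by auto
    then show ?thesis using Dw_indep1[OF x(1-3) True ws(1,2)] by simp
  next
    case False
    then have a: "a \<in> inp x" using assms(2) l by auto
    have "Dw a w q = sub y w (rv a w x)" "Dw a w' q = sub y w' (rv a w' x)" unfolding q Dw_def using False by auto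
    then show ?thesis using Dw_indep1[OF x(2,1,4) a ws(3,4)] by simp
  qed
qed

lemma D_Dw: assumes "wfq q" "a \<in> lab q" "w \<notin> lab q" shows "D a q = Dw a w q"
proof -
  have "\<exists>w. w \<notin> lab q" using fresh lab_fin assms by auto
  then have "(SOME w. w \<notin> lab q) \<notin> lab q" by (rule someI_ex)
  then show ?thesis unfolding D_def using Dw_indep assms by blast
qed

lemma Dw_props: assumes "wfq q" "a \<in> lab q" "w \<notin> lab q"
  shows "Dw a w q \<in> S" "inp (Dw a w q) = lab q - {a}"
proof -
  obtain x y where q: "q = (x, y)" by (cases q)
  have x: "x \<in> S" "y \<in> S" "inp x \<inter> inp y = {}" "inp y \<inter> inp x = {}" using assms q unfolding wfq_def by auto
  have l: "lab q = inp x \<union> inp y" using q lab_pair by auto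
  have ws: "w \<notin> inp x \<union> inp y" "w \<notin> inp y \<union> inp x" using assms(3) l by auto
  have "Dw a w q \<in> S \<and> inp (Dw a w q) = lab q - {a}"
  proof (cases "a \<in> inp y")
    case True
    then have "Dw a w q = sub x w (rv a w y)" unfolding Dw_def q by simp
    then show ?thesis using Dw_props1[OF x(1-3) True ws(1)] l by simp
  next
    case False
    then have a: "a \<in> inp x" using assms l by auto
    have "Dw a w q = sub y w (rv a w x)" using False unfolding Dw_def q by simp
    moreover have "inp y \<union> inp x - {a} = lab q - {a}" using l by auto
    ultimately show ?thesis using Dw_props1[OF x(2,1,4) a ws(2)] by simp
  qed
  then show "Dw a w q \<in> S" "inp (Dw a w q) = lab q - {a}" by auto
qed

lemma D_props: assumes "wfq q" "a \<in> lab q"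
  shows "D a q \<in> S" "inp (D a q) = lab q - {a}"
proof -
  obtain w where w: "w \<notin> lab q" using fresh lab_fin assms by blast
  have "D a q = Dw a w q" using D_Dw[OF assms w] .
  then show "D a q \<in> S" "inp (D a q) = lab q - {a}" using Dw_props[OF assms w] by auto
qed

lemma wfq_swap: "wfq (x, y) \<Longrightarrow> wfq (y, x)" unfolding wfq_def by auto
lemma lab_swap: "lab (x, y) = lab (y, x)" unfolding mating_labels_def by auto

lemma D_swap: assumes "wfq (x,y)" "a \<in> lab (x,y)" shows "D a (y,x) = D a (x,y)"
proof -
  obtain w where w: "w \<notin> lab (x,y)" using fresh lab_fin assms by blast
  have w2: "w \<notin> lab (y,x)" "a \<in> lab (y, x)" using w assms lab_swap by auto
  have "D a (y,x) = Dw a w (y,x)" using D_Dw[OF wfq_swap[OF assms(1)] w2(2,1)] .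
  moreover have "D a (x,y) = Dw a w (x,y)" using D_Dw[OF assms w] .
  moreover have "inp x \<inter> inp y = {}" using assms unfolding wfq_def by auto
  ultimately show ?thesis using assms(2)[unfolded lab_pair] unfolding Dw_def by auto
qed

lemma move_inv:
  assumes S1: "p1 \<in> S" "p2 \<in> S" "p3 \<in> S" and yp2: "y \<in> inp p2"
    and d12: "inp p1 \<inter> inp p2 = {}" and d13: "inp p1 \<inter> inp p3 = {}" and d23: "inp p2 \<inter> inp p3 = {}"
    and w1: "w \<notin> inp p1" and w2: "w \<notin> inp p2" and w3: "w \<notin> inp p3"
  shows "wfq (sub p3 y p2, p1) \<and> wfq (p3, sub p1 w (rv y w p2)) \<and>
     lab (sub p3 y p2, p1) = lab (p3, sub p1 w (rv y w p2)) \<and>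
     (\<forall>a \<in> lab (sub p3 y p2, p1). D a (sub p3 y p2, p1) = D a (p3, sub p1 w (rv y w p2)))"
proof -
  define s where "s = (sub p3 y p2, p1)"
  define T where "T = sub p1 w (rv y w p2)"
  define t where "t = (p3, T)"
  have yw: "y \<noteq> w" using yp2 w2 by auto
  have y1: "y \<notin> inp p1" and y3: "y \<notin> inp p3" using yp2 d12 d23 by auto
  have R: "rv y w p2 \<in> S" "inp (rv y w p2) = inp p2 - {y} \<union> {w}" using revI[OF S1(2) yp2 w2] by auto
  have wR: "w \<in> inp (rv y w p2)" and yR: "y \<notin> inp (rv y w p2)" using R(2) yw by auto
  have dR1: "inp (rv y w p2) \<inter> inp p1 = {}" using R(2) d12 w1 by auto
  have s1: "sub p3 y p2 \<in> S" "inp (sub p3 y p2) = inp p2 - {y} \<union> inp p3" using subI[OF S1(2) S1(3) yp2 d23] by auto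
  have t1: "T \<in> S" "inp T = inp (rv y w p2) - {w} \<union> inp p1" using subI[OF R(1) S1(1) wR dR1] unfolding T_def by auto
  have t2: "inp T = (inp p2 - {y}) \<union> inp p1" using t1(2) R(2) w2 by auto
  have wfs: "wfq s" unfolding s_def wfq_def using s1 S1 d12 d13 by auto
  have wft: "wfq t" unfolding t_def wfq_def using t1(1) t2 S1 d13 d23 by auto
  have labs: "lab s = (inp p2 - {y}) \<union> inp p3 \<union> inp p1" unfolding s_def lab_pair using s1 by auto
  have labt: "lab t = (inp p2 - {y}) \<union> inp p3 \<union> inp p1" unfolding t_def lab_pair using t2 by auto
  have ws: "w \<notin> lab s" using labs w1 w2 w3 by auto
  have yt: "y \<notin> lab t" using labt y1 y3 by auto
  have "D a s = D a t" if a: "a \<in> lab s" for a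
  proof -
    have at: "a \<in> lab t" using a labs labt by auto
    have Ds: "D a s = Dw a w s" using D_Dw[OF wfs a ws] .
    have Dt: "D a t = Dw a y t" using D_Dw[OF wft at yt] .
    consider (c3) "a \<in> inp p3" | (c1) "a \<in> inp p1" | (c2) "a \<in> inp p2" "a \<noteq> y" using a labs by auto
    then show ?thesis
    proof cases
      case c3
      have a1: "a \<notin> inp p1" using c3 d13 by auto
      have aT: "a \<notin> inp T" using t2 c3 d23 a1 by auto
      have A3: "rv a y p3 \<in> S" "inp (rv a y p3) = inp p3 - {a} \<union> {y}" using revI[OF S1(3) c3 y3] by auto
      have yA3: "y \<in> inp (rv a y p3)" using A3(2) by auto
      have dA3R: "inp (rv a y p3) \<inter> inp (rv y w p2) = {}" using A3(2) R(2) d23 yw w3 by auto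
      have dA31: "inp (rv a y p3) \<inter> inp p1 = {}" using A3(2) d13 y1 by auto
      have "Dw a w s = sub p1 w (rv a w (sub p3 y p2))" unfolding Dw_def s_def using a1 by simp
      also have "rv a w (sub p3 y p2) = sub (rv y w p2) y (rv a y p3)"
        by (rule rev_sub2[OF S1(2) S1(3) yp2 d23 w2 w3 c3])
      also have "sub p1 w (sub (rv y w p2) y (rv a y p3)) = sub (sub p1 w (rv y w p2)) y (rv a y p3)"
        by (rule assoc_seq[OF A3(1) R(1) S1(1) yA3 wR dA3R dA31 dR1])
      also have "\<dots> = Dw a y t" unfolding Dw_def t_def T_def using aT[unfolded T_def] by simp
      finally show ?thesis using Ds Dt by simp
    next
      case c1
      have aT: "a \<in> inp T" using t2 c1 by auto
      have A1: "rv a w p1 \<in> S" "inp (rv a w p1) = inp p1 - {a} \<union> {w}" using revI[OF S1(1) c1 w1] by auto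
      have wA1: "w \<in> inp (rv a w p1)" using A1(2) by auto
      have dA12: "inp (rv a w p1) \<inter> inp p2 = {}" using A1(2) d12 w2 by auto
      have dA13: "inp (rv a w p1) \<inter> inp p3 = {}" using A1(2) d13 w3 by auto
      have "Dw a w s = sub (sub p3 y p2) w (rv a w p1)" unfolding Dw_def s_def using c1 by simp
      also have "\<dots> = sub p3 y (sub p2 w (rv a w p1))"
        by (rule assoc_seq[OF A1(1) S1(2) S1(3) wA1 yp2 dA12 dA13 d23, symmetric])
      also have "p2 = rv w y (rv y w p2)" using rev_inv[OF S1(2) yp2 w2] by simp
      also have "sub (rv w y (rv y w p2)) w (rv a w p1) = rv a y (sub p1 w (rv y w p2))"
        by (rule rev_sub2[OF R(1) S1(1) wR dR1 yR y1 c1, symmetric])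
      also have "sub p3 y (rv a y (sub p1 w (rv y w p2))) = Dw a y t"
        unfolding Dw_def t_def T_def using aT[unfolded T_def] by simp
      finally show ?thesis using Ds Dt by simp
    next
      case c2
      have a1: "a \<notin> inp p1" using c2 d12 by auto
      have aw: "a \<noteq> w" using c2 w2 by auto
      have aT: "a \<in> inp T" using t2 c2 by auto
      have aR: "a \<in> inp (rv y w p2)" using R(2) c2 by auto
      have A2: "rv a w p2 \<in> S" "inp (rv a w p2) = inp p2 - {a} \<union> {w}" using revI[OF S1(2) c2(1) w2] by auto
      have yA2: "y \<in> inp (rv a w p2)" and wA2: "w \<in> inp (rv a w p2)" using A2(2) yp2 c2 by auto
      have dA23: "inp (rv a w p2) \<inter> inp p3 = {}" using A2(2) d23 w3 by auto
      have dA21: "inp (rv a w p2) \<inter> inp p1 = {}" using A2(2) d12 w1 by auto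
      have d31: "inp p3 \<inter> inp p1 = {}" using d13 by auto
      have "Dw a w s = sub p1 w (rv a w (sub p3 y p2))" unfolding Dw_def s_def using a1 by simp
      also have "rv a w (sub p3 y p2) = sub p3 y (rv a w p2)"
        by (rule rev_sub1[OF S1(2) S1(3) yp2 d23 w2 w3 c2])
      also have "sub p1 w (sub p3 y (rv a w p2)) = sub p3 y (sub p1 w (rv a w p2))"
        by (rule assoc_par[OF A2(1) S1(3) S1(1) yA2 wA2 yw dA23 dA21 d31])
      also have "rv a w p2 = rv a y (rv y w p2)" using rev_chain[OF S1(2) c2(1) yp2 c2(2) w2] by simp
      also have "sub p1 w (rv a y (rv y w p2)) = rv a y (sub p1 w (rv y w p2))"
        by (rule rev_sub1[OF R(1) S1(1) wR dR1 yR y1 aR aw, symmetric])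
      also have "sub p3 y (rv a y (sub p1 w (rv y w p2))) = Dw a y t"
        unfolding Dw_def t_def T_def using aT[unfolded T_def] by simp
      finally show ?thesis using Ds Dt by simp
    qed
  qed
  then show ?thesis using wfs wft labs labt unfolding s_def t_def T_def by auto
qed

lemma step_inv: assumes "mate_step P s t"
  shows "wfq s \<and> wfq t \<and> lab s = lab t \<and> (\<forall>a \<in> lab s. D a s = D a t)"
  using assms
proof cases
  case (swap p p')
  have w: "wfq (p, p')" using swap unfolding wfq_def by auto
  have "\<forall>a \<in> lab s. D a s = D a t" using D_swap[OF w] swap by auto
  then show ?thesis using lab_swap[of p p'] wfq_swap[OF w] w swap by auto
next
  case (move p1 p2 p3 y w)
  then show ?thesis using move_inv[of p1 p2 p3 y w] by simp
qed

lemma meq_inv: assumes "mate_eq P q q'" "wfq q"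
  shows "wfq q' \<and> lab q' = lab q \<and> (\<forall>a \<in> lab q. D a q' = D a q)"
  using assms(1) unfolding mate_eq_def
proof (induction rule: equivclp_induct)
  case base then show ?case using assms by auto
next
  case (step y z)
  then show ?case using step_inv by metis
qed

lemma meq_refl: "mate_eq P q q" unfolding mate_eq_def by auto
lemma meq_sym: "mate_eq P q q' \<Longrightarrow> mate_eq P q' q" unfolding mate_eq_def by (rule equivclp_sym)
lemma meq_trans: "mate_eq P q q' \<Longrightarrow> mate_eq P q' q'' \<Longrightarrow> mate_eq P q q''"
  unfolding mate_eq_def by (rule equivclp_trans)
lemma meq_step: "mate_step P q q' \<Longrightarrow> mate_eq P q q'" unfolding mate_eq_def by auto
lemma meq_swap: "wfq (x,y) \<Longrightarrow> mate_eq P (x,y) (y,x)"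
  by (rule meq_step, rule mate_step.swap) (auto simp: wfq_def)

lemma exist2: assumes "wfq (x,y)" "a \<in> inp y" shows "mate_eq P (x,y) (D a (x,y), un a)"
proof -
  have x: "x \<in> S" "y \<in> S" "inp x \<inter> inp y = {}" using assms unfolding wfq_def by auto
  have fxy: "finite (inp x \<union> inp y)" using fin x by auto
  obtain w where w: "w \<notin> inp x \<union> inp y" using fresh[OF fxy] by auto
  have fxyw: "finite (inp x \<union> inp y \<union> {w})" using fxy by auto
  obtain w' where w': "w' \<notin> inp x \<union> inp y \<union> {w}" using fresh[OF fxyw] by auto
  let ?Y = "rl (ren a w) y"
  have inj: "inj_on (ren a w) (inp y)" by (rule inj_ren) (use w in auto)
  have aw: "a \<noteq> w" using w assms by auto
  have ax: "a \<notin> inp x" using assms x by auto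
  have Y1: "?Y \<in> S" using relab_S[OF x(2) inj] .
  have imgY: "inp ?Y = ren a w ` inp y" using relab_inp[OF x(2) inj] .
  have Y2: "inp ?Y = inp y - {a} \<union> {w}" unfolding imgY using assms aw w unfolding ren_def by (auto simp: image_def)
  have wY: "w \<in> inp ?Y" and aY: "a \<notin> inp ?Y" using Y2 aw by auto
  have "sub (un a) w ?Y = rl (ren w a) ?Y" by (rule unit_ren[OF Y1 wY aY])
  also have "\<dots> = rl (ren w a \<circ> ren a w) y"
  proof (rule relab_comp[OF x(2) inj])
    show "inj_on (ren w a) (ren a w ` inp y)" unfolding imgY[symmetric] Y2 by (rule inj_ren) auto
  qed
  also have "\<dots> = y"
  proof (rule relab_id[OF x(2)])
    fix v assume "v \<in> inp y"
    then have "v \<noteq> w" using w by auto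
    then show "(ren w a \<circ> ren a w) v = v" unfolding ren_def by auto
  qed
  finally have yeq: "sub (un a) w ?Y = y" .
  have w'y: "w' \<notin> inp y" using w' by auto
  have "rl (ren a w) (rv a w' y) = rv (ren a w a) (ren a w w') (rl (ren a w) y)"
  proof (rule rev_nat[OF x(2) assms(2) w'y])
    show "inj_on (ren a w) (insert w' (inp y))" by (rule inj_ren) (use w w' in auto)
  qed
  moreover have "rl (ren a w) (rv a w' y) = rv a w' y"
  proof -
    have r: "rv a w' y \<in> S" "inp (rv a w' y) = inp y - {a} \<union> {w'}" using revI[OF x(2) assms(2) w'y] by auto
    show ?thesis
    proof (rule relab_id[OF r(1)])
      fix v assume "v \<in> inp (rv a w' y)"
      then have "v \<noteq> a" using r(2) w' assms by auto
      then show "ren a w v = v" unfolding ren_def by auto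
    qed
  qed
  moreover have wa: "ren a w w' = w'" "ren a w a = w" using w' assms unfolding ren_def by auto
  ultimately have req: "rv w w' ?Y = rv a w' y" by simp
  have "mate_eq P (x,y) (y,x)" using meq_swap assms by auto
  moreover have "mate_eq P (sub (un a) w ?Y, x) (un a, sub x w' (rv w w' ?Y))"
  proof (rule meq_step, rule mate_step.move)
    show "x \<in> S" "?Y \<in> S" "un a \<in> S" "w \<in> inp ?Y" using x Y1 unit_S wY by auto
    show "inp x \<inter> inp ?Y = {}" using Y2 x w by auto
    show "inp x \<inter> inp (un a) = {}" using unit_inp ax by auto
    show "inp ?Y \<inter> inp (un a) = {}" using unit_inp aY by auto
    show "w' \<notin> inp x" "w' \<notin> inp ?Y" "w' \<notin> inp (un a)" using w' Y2 unit_inp assms by auto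
  qed
  moreover have "mate_eq P (un a, sub x w' (rv a w' y)) (sub x w' (rv a w' y), un a)"
  proof (rule meq_swap)
    have w'': "w' \<notin> inp x \<union> inp y" using w' by auto
    show "wfq (un a, sub x w' (rv a w' y))" using Dw_props1[OF x assms(2) w''] unit_S unit_inp
      unfolding wfq_def by auto
  qed
  moreover have "sub x w' (rv a w' y) = D a (x,y)"
  proof -
    have "w' \<notin> lab (x, y)" "a \<in> lab (x, y)" using w' assms lab_pair by auto
    then have "D a (x,y) = Dw a w' (x,y)" using D_Dw[OF assms(1)] by auto
    then show ?thesis unfolding Dw_def using assms by simp
  qed
  ultimately show ?thesis using yeq req meq_trans by metis
qed

lemma exist: assumes "wfq q" "a \<in> lab q" shows "mate_eq P q (D a q, un a)"
proof -
  obtain x y where q: "q = (x,y)" by (cases q)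
  show ?thesis
  proof (cases "a \<in> inp y")
    case True then show ?thesis using exist2 assms q by auto
  next
    case False
    then have "a \<in> inp x" using assms q unfolding mating_labels_def by auto
    then have "mate_eq P (y,x) (D a (y,x), un a)" using exist2 wfq_swap assms q by auto
    then show ?thesis using meq_swap meq_trans D_swap assms q by metis
  qed
qed

lemma D_unit: assumes "p \<in> S" "a \<notin> inp p" shows "D a (p, un a) = p"
proof -
  have wf: "wfq (p, un a)" using assms unit_S unit_inp unfolding wfq_def by auto
  obtain w where w: "w \<notin> inp p \<union> {a}" using fresh fin assms by (metis finite_Un finite.intros)
  have "D a (p, un a) = Dw a w (p, un a)" apply (rule D_Dw) using wf w unit_inp
    unfolding mating_labels_def by auto
  also have "\<dots> = sub p w (un w)" unfolding Dw_def using unit_inp rho w by auto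
  also have "\<dots> = p" using unit_right assms w by auto
  finally show ?thesis .
qed

lemma deriv_eq: assumes "wfq q" "a \<in> lab q" shows "mate_deriv P q a = D a q"
  unfolding mate_deriv_def
proof (rule the_equality)
  show "D a q \<in> S \<and> inp (D a q) = lab q - {a} \<and> mate_eq P q (D a q, un a)"
    using D_props exist assms by auto
next
  fix p assume p: "p \<in> S \<and> inp p = lab q - {a} \<and> mate_eq P q (p, un a)"
  have "D a (p, un a) = D a q" using meq_inv[of q "(p, un a)"] p assms by auto
  then show "p = D a q" using D_unit p by auto
qed

end

context ROP begin

definition Gl :: "'o \<times> 'o \<Rightarrow> 'l \<Rightarrow> 'o \<times> 'o \<Rightarrow> 'l \<Rightarrow> 'o \<times> 'o" where
  "Gl q1 h q2 h' = (mate_deriv P q1 h, mate_deriv P q2 h')"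

lemma Gl_D: "wfq q1 \<Longrightarrow> h \<in> lab q1 \<Longrightarrow> wfq q2 \<Longrightarrow> h' \<in> lab q2 \<Longrightarrow> Gl q1 h q2 h' = (D h q1, D h' q2)"
  unfolding Gl_def using deriv_eq by auto

lemma Gl_wf: assumes "wfq q1" "h \<in> lab q1" "wfq q2" "h' \<in> lab q2" "lab q1 \<inter> lab q2 = {}"
  shows "wfq (Gl q1 h q2 h')" "lab (Gl q1 h q2 h') = (lab q1 - {h}) \<union> (lab q2 - {h'})"
  using Gl_D[OF assms(1-4)] D_props[OF assms(1,2)] D_props[OF assms(3,4)] assms(5)
  unfolding wfq_def mating_labels_def by auto

lemma Gl_sym: assumes "wfq q1" "h \<in> lab q1" "wfq q2" "h' \<in> lab q2" "lab q1 \<inter> lab q2 = {}"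
  shows "mate_eq P (Gl q1 h q2 h') (Gl q2 h' q1 h)"
  using Gl_D[OF assms(1-4)] Gl_D[OF assms(3,4,1,2)] meq_swap Gl_wf[OF assms] by auto

lemma Gl_cong1: assumes "mate_eq P q1 q1'" "wfq q1" "h \<in> lab q1"
  shows "Gl q1 h q2 h' = Gl q1' h q2 h'"
proof -
  have "wfq q1'" "lab q1' = lab q1" "D h q1' = D h q1" using meq_inv[OF assms(1,2)] assms(3) by auto
  then show ?thesis unfolding Gl_def using deriv_eq assms by auto
qed

lemma Gl_cong2: assumes "mate_eq P q2 q2'" "wfq q2" "h' \<in> lab q2"
  shows "Gl q1 h q2 h' = Gl q1 h q2' h'"
proof -
  have "wfq q2'" "lab q2' = lab q2" "D h' q2' = D h' q2" using meq_inv[OF assms(1,2)] assms(3) by auto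
  then show ?thesis unfolding Gl_def using deriv_eq assms by auto
qed

lemma Gl_assoc: assumes "wfq q1" "wfq q2" "wfq q3" "lab q1 \<inter> lab q2 = {}" "lab q1 \<inter> lab q3 = {}"
  "lab q2 \<inter> lab q3 = {}" "h \<in> lab q1" "h' \<in> lab q2" "k \<in> lab q2" "h' \<noteq> k" "k' \<in> lab q3"
  shows "mate_eq P (Gl (Gl q1 h q2 h') k q3 k') (Gl q1 h (Gl q2 k q3 k') h')"
proof -
  define X1 where "X1 = D h q1"
  define X2 where "X2 = D h' q2"
  define Y3 where "Y3 = D k' q3"
  have X1: "X1 \<in> S" "inp X1 = lab q1 - {h}" using D_props assms X1_def by auto
  have X2: "X2 \<in> S" "inp X2 = lab q2 - {h'}" using D_props assms X2_def by auto
  have Y3: "Y3 \<in> S" "inp Y3 = lab q3 - {k'}" using D_props assms Y3_def by auto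
  have fins: "finite (lab q1)" "finite (lab q2)" "finite (lab q3)" using lab_fin assms by auto
  obtain w where w: "w \<notin> lab q1 \<union> lab q2 \<union> lab q3" using fresh fins by (metis finite_Un)
  obtain w' where w': "w' \<notin> lab q1 \<union> lab q2 \<union> lab q3 \<union> {w}" using fresh fins by (metis finite_Un finite.intros)
  have kX2: "k \<in> inp X2" using X2 assms by auto
  have wf12: "wfq (X1, X2)" using X1 X2 assms unfolding wfq_def by auto
  have G12: "Gl q1 h q2 h' = (X1, X2)" using Gl_D assms X1_def X2_def by auto
  have lab12: "lab (X1, X2) = (lab q1 - {h}) \<union> (lab q2 - {h'})" using X1 X2 unfolding mating_labels_def by auto
  have "D k (X1, X2) = Dw k w (X1, X2)" apply (rule D_Dw) using wf12 lab12 kX2 w assms by auto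
  also have "\<dots> = sub X1 w (rv k w X2)" unfolding Dw_def using kX2 by auto
  finally have DL: "D k (X1,X2) = sub X1 w (rv k w X2)" .
  have LHS: "Gl (Gl q1 h q2 h') k q3 k' = (sub X1 w (rv k w X2), Y3)"
    using G12 Gl_D[of "(X1,X2)" k q3 k'] wf12 lab12 assms DL Y3_def by auto
  have e2: "mate_eq P q2 (X2, un h')" using exist assms X2_def by auto
  obtain v where v: "v \<notin> lab q2" using fresh fins by auto
  have hX2: "h' \<notin> inp X2" using X2 by auto
  have wfX2u: "wfq (X2, un h')" using X2 unit_S unit_inp unfolding wfq_def by auto
  have labX2u: "lab (X2, un h') = lab q2" using X2 unit_inp assms unfolding mating_labels_def by auto
  have vX2: "v \<notin> inp X2" using v X2 by auto
  have kv: "k \<noteq> v" using v assms by auto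
  have hv: "h' \<noteq> v" using v assms by auto
  have RV2: "rv k v X2 \<in> S" "inp (rv k v X2) = inp X2 - {k} \<union> {v}" using revI[OF X2(1) kX2 vX2] by auto
  have "D k q2 = D k (X2, un h')" using meq_inv[OF e2] assms by auto
  also have "\<dots> = Dw k v (X2, un h')" apply (rule D_Dw) using wfX2u labX2u v assms by auto
  also have "\<dots> = sub (un h') v (rv k v X2)" unfolding Dw_def using unit_inp assms by auto
  also have "\<dots> = rl (ren v h') (rv k v X2)"
    by (rule unit_ren[OF RV2(1)]) (use RV2(2) hX2 hv in auto)
  also have "\<dots> = rv (ren v h' k) (ren v h' v) (rl (ren v h') X2)"
  proof (rule rev_nat[OF X2(1) kX2 vX2])
    show "inj_on (ren v h') (insert v (inp X2))" by (rule inj_ren) (use hX2 in auto)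
  qed
  also have "rl (ren v h') X2 = X2"
  proof (rule relab_id[OF X2(1)])
    fix u assume "u \<in> inp X2" then have "u \<noteq> v" using vX2 by auto
    then show "ren v h' u = u" unfolding ren_def by auto
  qed
  finally have Z2: "D k q2 = rv k h' X2" using kv unfolding ren_def by auto
  have Z2p: "rv k h' X2 \<in> S" "inp (rv k h' X2) = lab q2 - {k}" using revI[OF X2(1) kX2 hX2] X2 assms by auto
  have wf23: "wfq (rv k h' X2, Y3)" using Z2p Y3 assms unfolding wfq_def by auto
  have G23: "Gl q2 k q3 k' = (rv k h' X2, Y3)" using Gl_D assms Z2 Y3_def by auto
  have lab23: "lab (rv k h' X2, Y3) = (lab q2 - {k}) \<union> (lab q3 - {k'})" using Z2p Y3 unfolding mating_labels_def by auto
  have "D h' (rv k h' X2, Y3) = Dw h' w' (rv k h' X2, Y3)" apply (rule D_Dw) using wf23 lab23 w' assms by auto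
  also have "\<dots> = sub Y3 w' (rv h' w' (rv k h' X2))" unfolding Dw_def using Z2p Y3 assms by auto
  also have "rv h' w' (rv k h' X2) = rl (ren k w') X2" apply (rule revrev) using X2 kX2 w' assms by auto
  finally have DR: "D h' (rv k h' X2, Y3) = sub Y3 w' (rl (ren k w') X2)" .
  have RHS: "Gl q1 h (Gl q2 k q3 k') h' = (X1, sub Y3 w' (rl (ren k w') X2))"
    using G23 Gl_D[of q1 h "(rv k h' X2, Y3)" h'] wf23 lab23 assms DR X1_def by auto
  have wX2: "w \<notin> inp X2" using w X2 by auto
  have Rw: "rv k w X2 \<in> S" "inp (rv k w X2) = inp X2 - {k} \<union> {w}" using revI[OF X2(1) kX2 wX2] by auto
  have "mate_eq P (sub X1 w (rv k w X2), Y3) (X1, sub Y3 w' (rv w w' (rv k w X2)))"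
    apply (rule meq_step, rule mate_step.move) using X1 X2 Y3 Rw w w' assms by auto
  moreover have "rv w w' (rv k w X2) = rl (ren k w') X2" apply (rule revrev) using X2 kX2 w w' by auto
  ultimately show ?thesis using LHS RHS by simp
qed

end

definition mv :: "nat \<Rightarrow> nat \<Rightarrow> nat \<Rightarrow> nat" where
  "mv j n = (\<lambda>i. if i = n then j else if j \<le> i \<and> i < n then i + 1 else i)"

lemma mv_sign: "j \<le> n \<Longrightarrow> permutation (mv j n) \<and> sign (mv j n) = (-1) ^ (n - j)"
proof (induction n)
  case 0
  then have "mv j 0 = id" unfolding mv_def by auto
  then show ?case by simp
next
  case (Suc n)
  show ?case
  proof (cases "j = Suc n")
    case True
    then have "mv j (Suc n) = id" unfolding mv_def by auto
    then show ?thesis using True by simp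
  next
    case False
    then have jn: "j \<le> n" using Suc by auto
    have e: "mv j (Suc n) = mv j n \<circ> transpose n (Suc n)"
      using jn unfolding mv_def by (auto simp: fun_eq_iff transpose_def)
    have "permutation (transpose n (Suc n))" by (rule permutation_swap_id)
    then have "permutation (mv j (Suc n))" using Suc.IH jn e permutation_compose by metis
    moreover have "sign (mv j (Suc n)) = (-1) ^ (Suc n - j)"
    proof -
      have "sign (mv j (Suc n)) = sign (mv j n) * sign (transpose n (Suc n))"
        using e sign_compose[of "mv j n" "transpose n (Suc n)"] Suc.IH jn permutation_swap_id by metis
      moreover have "sign (transpose n (Suc n)) = -1" using sign_swap_id[of n "Suc n"] by simp
      ultimately show ?thesis using Suc.IH jn by (simp add: Suc_diff_le)
    qed
    ultimately show ?thesis by simp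
  qed
qed

definition stdp :: "nat \<Rightarrow> nat \<Rightarrow> nat \<Rightarrow> nat" where
  "stdp p q i = (if i = p then 1 else if i = q then 2 else i + 2 - (if p < i then 1 else 0) - (if q < i then 1 else 0))"

lemma stdp_decomp: assumes "1 \<le> p" "p \<le> k" "1 \<le> q" "q \<le> k" "p \<noteq> q"
  shows "(\<lambda>i. if i \<in> {1..k} then stdp p q i else i) = mv 2 (if q < p then q + 1 else q) \<circ> mv 1 p"
  using assms unfolding stdp_def mv_def by (auto simp: fun_eq_iff)

lemma stdp_sign: assumes "1 \<le> p" "p \<le> k" "1 \<le> q" "q \<le> k" "p \<noteq> q"
  shows "sign (\<lambda>i. if i \<in> {1..k} then stdp p q i else i) = (-1) ^ (p - 1 + ((if q < p then q + 1 else q) - 2))"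
proof -
  have a: "1 \<le> p" and b: "2 \<le> (if q < p then q + 1 else q)" using assms by auto
  have "sign (\<lambda>i. if i \<in> {1..k} then stdp p q i else i) = sign (mv 2 (if q < p then q + 1 else q)) * sign (mv 1 p)"
    using stdp_decomp[OF assms] mv_sign[OF a] mv_sign[OF b] sign_compose by metis
  then show ?thesis using mv_sign[OF a] mv_sign[OF b] by (simp add: power_add mult.commute)
qed

lemma sign_swap12: assumes "2 \<le> (k::nat)"
  shows "sign (\<lambda>i::nat. if i \<in> {1..k} then (if i = 1 then 2 else if i = 2 then 1 else i) else i) = -1"
proof -
  have "(\<lambda>i. if i \<in> {1..k} then (if i = 1 then 2 else if i = 2 then 1 else i) else i) = transpose (1::nat) 2"
    using assms by (auto simp: fun_eq_iff transpose_def)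
  then show ?thesis by (simp add: sign_swap_id)
qed

lemma card_below: assumes "bij_betw om V {1..card V}" "v \<in> V" "finite V"
  shows "card {w \<in> V. om w \<le> om v} = om v"
proof -
  have inj: "inj_on om V" using assms bij_betw_def by auto
  have ov: "om v \<in> {1..card V}" using assms bij_betwE by blast
  have "om ` {w \<in> V. om w \<le> om v} = {1..om v}"
  proof
    show "om ` {w \<in> V. om w \<le> om v} \<subseteq> {1..om v}" using assms bij_betwE by fastforce
    show "{1..om v} \<subseteq> om ` {w \<in> V. om w \<le> om v}"
    proof
      fix i assume i: "i \<in> {1..om v}"
      then have "i \<in> {1..card V}" using ov by auto
      then have "i \<in> om ` V" using assms(1) unfolding bij_betw_def by simp
      then obtain w where "w \<in> V" "om w = i" by blast
      then show "i \<in> om ` {w \<in> V. om w \<le> om v}" using i by auto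
    qed
  qed
  moreover have "inj_on om {w \<in> V. om w \<le> om v}" using inj by (rule inj_on_subset) auto
  ultimately show ?thesis using card_image by fastforce
qed

lemma bij_by_card: assumes "inj_on f A" "f ` A \<subseteq> B" "card A = card B" "finite B"
  shows "bij_betw f A B"
  using assms card_image card_subset_eq unfolding bij_betw_def by metis

definition ind01 :: "bool \<Rightarrow> nat" where "ind01 b = (if b then 1 else 0)"

lemma shift_mono: assumes "pa \<noteq> pb" "x \<noteq> pa" "x \<noteq> pb" "y \<noteq> pa" "y \<noteq> pb" "x < y"
  shows "x + 1 - ind01 (pa < x) - ind01 (pb < x) < y + 1 - ind01 (pa < y) - ind01 (pb < y)"
  using assms unfolding ind01_def by auto

lemma shift_range: assumes "pa \<noteq> pb" "x \<noteq> pa" "x \<noteq> pb" "1 \<le> x" "x \<le> k" "1 \<le> pa" "pa \<le> k" "1 \<le> pb" "pb \<le> k"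
  shows "2 \<le> x + 1 - ind01 (pa < x) - ind01 (pb < x)" "x + 1 - ind01 (pa < x) - ind01 (pb < x) \<le> k - 1"
  using assms unfolding ind01_def by auto

context ROP begin

lemma mwf_iff: "mating_wf P K q \<longleftrightarrow> wfq q \<and> lab q = K"
  unfolding mating_wf_def wfq_def by auto

lemma og_facts: assumes "is_ograph P (G, om, src)"
  shows "finite (gV G)" "finite (gH G)" "bij_betw om (gV G) {1..card (gV G)}" "src \<subseteq> gH G"
    "\<And>h. h \<in> gH G \<Longrightarrow> gvert G h \<in> gV G \<and> gopp G h \<in> gH G \<and> gopp G h \<noteq> h \<and> gopp G (gopp G h) = h"
    "\<And>h. h \<in> gH G \<Longrightarrow> h \<in> src \<longleftrightarrow> gopp G h \<notin> src"
    "\<And>v. v \<in> gV G \<Longrightarrow> wfq (gstr G v) \<and> lab (gstr G v) = hedges_at G v"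
proof -
  have A: "is_qgraph P G" "bij_betw om (gV G) {1..card (gV G)}" "src \<subseteq> gH G"
     "\<forall>h \<in> gH G. h \<in> src \<longleftrightarrow> gopp G h \<notin> src" using assms unfolding is_ograph_def by simp_all
  have Q: "finite (gV G)" "finite (gH G)"
    "\<forall>h \<in> gH G. gvert G h \<in> gV G \<and> gopp G h \<in> gH G \<and> gopp G h \<noteq> h \<and> gopp G (gopp G h) = h"
    "\<forall>v \<in> gV G. mating_wf P (hedges_at G v) (gstr G v)" using A(1) unfolding is_qgraph_def by simp_all
  show "finite (gV G)" "finite (gH G)" "bij_betw om (gV G) {1..card (gV G)}" "src \<subseteq> gH G" using A Q by simp_all
  show "\<And>h. h \<in> gH G \<Longrightarrow> gvert G h \<in> gV G \<and> gopp G h \<in> gH G \<and> gopp G h \<noteq> h \<and> gopp G (gopp G h) = h"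
    using Q(3) by blast
  show "\<And>h. h \<in> gH G \<Longrightarrow> h \<in> src \<longleftrightarrow> gopp G h \<notin> src" using A(4) by blast
  show "\<And>v. v \<in> gV G \<Longrightarrow> wfq (gstr G v) \<and> lab (gstr G v) = hedges_at G v"
    using Q(4) unfolding mwf_iff by blast
qed

lemma contract_fields:
  fixes G :: "('v, 'l, 'o) qgraph" and h :: 'l
  defines "a \<equiv> gvert G h" and "b \<equiv> gvert G (gopp G h)"
  shows "gV (fst (contract P (G, om, src) h)) = gV G - {b}"
    "gH (fst (contract P (G, om, src) h)) = gH G - {h, gopp G h}"
    "gvert (fst (contract P (G, om, src) h)) = (\<lambda>x. if gvert G x = b then a else gvert G x)"
    "gopp (fst (contract P (G, om, src) h)) = gopp G"
    "gstr (fst (contract P (G, om, src) h)) = (\<lambda>v. if v = a then Gl (gstr G a) h (gstr G b) (gopp G h) else gstr G v)"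
    "fst (snd (contract P (G, om, src) h)) = (\<lambda>v. if v = a then 1 else ord_std (G, om, src) h v - 1)"
    "snd (snd (contract P (G, om, src) h)) = src - {h}"
  unfolding contract_def a_def b_def Gl_def by (auto simp: Let_def)

lemma ord_std_val: assumes og: "is_ograph P (G, om, src)"
  and "a = gvert G h" "b = gvert G (gopp G h)" "a \<noteq> b" "a \<in> gV G" "b \<in> gV G" "v \<in> gV G" "v \<noteq> a" "v \<noteq> b"
  shows "ord_std (G, om, src) h v = om v + 2 - ind01 (om a < om v) - ind01 (om b < om v)"
proof -
  note f = og_facts[OF og]
  have inj: "inj_on om (gV G)" using f(3) bij_betw_def by auto
  have ne: "om a \<noteq> om v" "om b \<noteq> om v" "om a \<noteq> om b" using inj assms inj_on_eq_iff by metis+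
  have "{w \<in> gV G - {a, b}. om w \<le> om v} = {w \<in> gV G. om w \<le> om v} - {a, b}" by auto
  moreover have "card ({w \<in> gV G. om w \<le> om v} - {a, b}) = card {w \<in> gV G. om w \<le> om v} - card ({w \<in> gV G. om w \<le> om v} \<inter> {a,b})"
    using card_Diff_subset_Int[of "{w \<in> gV G. om w \<le> om v}" "{a,b}"] by simp
  moreover have "card ({w \<in> gV G. om w \<le> om v} \<inter> {a,b}) = ind01 (om a < om v) + ind01 (om b < om v)"
  proof -
    have "{w \<in> gV G. om w \<le> om v} \<inter> {a,b} = (if om a < om v then {a} else {}) \<union> (if om b < om v then {b} else {})"
      using assms ne by auto
    then show ?thesis using assms unfolding ind01_def by auto
  qed
  moreover have "card {w \<in> gV G. om w \<le> om v} = om v" using card_below f assms by auto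
  ultimately have c: "card {w \<in> gV G - {a, b}. om w \<le> om v} = om v - (ind01 (om a < om v) + ind01 (om b < om v))" by simp
  have "ind01 (om a < om v) + ind01 (om b < om v) \<le> om v" using ne unfolding ind01_def by auto
  then show ?thesis unfolding ord_std_def using assms c by (auto simp: Let_def)
qed


lemma edge_facts: assumes og: "is_ograph P (G, om, src)" and hs: "h \<in> src"
  shows "h \<in> gH G" "gopp G h \<in> gH G" "gopp G h \<notin> src" "gopp G h \<noteq> h" "gopp G (gopp G h) = h"
    "gvert G h \<in> gV G" "gvert G (gopp G h) \<in> gV G"
    "h \<in> hedges_at G (gvert G h)" "gopp G h \<in> hedges_at G (gvert G (gopp G h))"
proof -
  note f = og_facts[OF og]
  show h: "h \<in> gH G" using f(4) hs by auto
  show "gopp G h \<in> gH G" "gopp G h \<noteq> h" "gopp G (gopp G h) = h" "gvert G h \<in> gV G" using f(5)[OF h] by auto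
  then show "gvert G (gopp G h) \<in> gV G" using f(5) by auto
  show "gopp G h \<notin> src" using f(6)[OF h] hs by auto
  show "h \<in> hedges_at G (gvert G h)" using h unfolding hedges_at_def by auto
  show "gopp G h \<in> hedges_at G (gvert G (gopp G h))" using f(5)[OF h] unfolding hedges_at_def by auto
qed

lemma ord_range: assumes og: "is_ograph P (G, om, src)" "v \<in> gV G"
  shows "1 \<le> om v" "om v \<le> card (gV G)"
  using og_facts(3)[OF og(1)] og(2) bij_betwE by fastforce+

lemma ord_inj: assumes og: "is_ograph P (G, om, src)" "v \<in> gV G" "w \<in> gV G" "v \<noteq> w"
  shows "om v \<noteq> om w"
  using og_facts(3)[OF og(1)] og(2-4) unfolding bij_betw_def inj_on_def by blast

lemma contract_ord: assumes og: "is_ograph P (G, om, src)" and hs: "h \<in> src"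
  and ab: "a = gvert G h" "b = gvert G (gopp G h)" "a \<noteq> b" and v: "v \<in> gV G" "v \<noteq> b"
  shows "fst (snd (contract P (G, om, src) h)) v = (if v = a then 1 else om v + 1 - ind01 (om a < om v) - ind01 (om b < om v))"
proof (cases "v = a")
  case True
  then show ?thesis using contract_fields(6)[where G=G and h=h and om=om and src=src] ab by simp
next
  case False
  have aV: "a \<in> gV G" "b \<in> gV G" using edge_facts[OF og hs] ab by auto
  have "ord_std (G, om, src) h v = om v + 2 - ind01 (om a < om v) - ind01 (om b < om v)"
    by (rule ord_std_val[OF og ab aV v(1) False v(2)])
  moreover have "1 \<le> om v" using ord_range[OF og v(1)] by simp
  ultimately show ?thesis using contract_fields(6)[where G=G and h=h and om=om and src=src] ab False unfolding ind01_def by auto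
qed

lemma contract_sign_val: assumes og: "is_ograph P (G, om, src)" and hs: "h \<in> src"
  and ab: "a = gvert G h" "b = gvert G (gopp G h)" "a \<noteq> b"
  shows "contract_sign (G, om, src) h = (-1) ^ (om a - 1 + ((if om b < om a then om b + 1 else om b) - 2))"
proof -
  note f = og_facts[OF og]
  define k where "k = card (gV G)"
  have aV: "a \<in> gV G" "b \<in> gV G" using edge_facts[OF og hs] ab by auto
  have ne: "om a \<noteq> om b" using ord_inj[OF og aV ab(3)] .
  have funeq: "(\<lambda>i. if i \<in> {1..k} then ord_std (G, om, src) h (inv_into (gV G) om i) else i) =
             (\<lambda>i. if i \<in> {1..k} then stdp (om a) (om b) i else i)"
  proof
    fix i
    show "(if i \<in> {1..k} then ord_std (G, om, src) h (inv_into (gV G) om i) else i) =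
          (if i \<in> {1..k} then stdp (om a) (om b) i else i)"
    proof (cases "i \<in> {1..k}")
      case True
      define v where "v = inv_into (gV G) om i"
      have vV: "v \<in> gV G" and ov: "om v = i"
        using True f(3) unfolding v_def k_def by (auto intro: bij_betw_inv_into_left inv_into_into simp: bij_betw_def f_inv_into_f)
      have "ord_std (G, om, src) h v = stdp (om a) (om b) i"
      proof (cases "v = a")
        case True then show ?thesis using ov ab unfolding ord_std_def stdp_def by (simp add: Let_def)
      next
        case va: False
        show ?thesis
        proof (cases "v = b")
          case True then show ?thesis using ov ab ne va unfolding ord_std_def stdp_def by (simp add: Let_def)
        next
          case vb: False
          have "om v \<noteq> om a" "om v \<noteq> om b" using ord_inj[OF og vV] aV va vb by auto
          then show ?thesis using ord_std_val[OF og ab aV vV va vb] ov unfolding stdp_def ind01_def by auto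
        qed
      qed
      then show ?thesis using True v_def by simp
    next
      case False
      then show ?thesis by (simp only: if_False)
    qed
  qed
  have r: "1 \<le> om a" "om a \<le> k" "1 \<le> om b" "om b \<le> k" using ord_range[OF og] aV k_def by auto
  have "contract_sign (G, om, src) h = perm_sign k (\<lambda>i. ord_std (G, om, src) h (inv_into (gV G) om i))"
    unfolding contract_sign_def k_def by simp
  also have "\<dots> = sign (\<lambda>i. if i \<in> {1..k} then ord_std (G, om, src) h (inv_into (gV G) om i) else i)"
    unfolding perm_sign_def by (rule refl)
  also have "\<dots> = sign (\<lambda>i. if i \<in> {1..k} then stdp (om a) (om b) i else i)"
    by (simp only: funeq)
  finally have "contract_sign (G, om, src) h = sign (\<lambda>i. if i \<in> {1..k} then stdp (om a) (om b) i else i)" .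
  then show ?thesis using stdp_sign[OF r ne] by simp
qed

lemma contract_og: assumes og: "is_ograph P (G, om, src)" and hs: "h \<in> src"
  and ab: "gvert G h \<noteq> gvert G (gopp G h)"
  shows "is_ograph P (contract P (G, om, src) h)"
proof -
  note f = og_facts[OF og]
  note e = edge_facts[OF og hs]
  define a where "a = gvert G h"
  define b where "b = gvert G (gopp G h)"
  define h' where "h' = gopp G h"
  have ab': "a \<noteq> b" using ab a_def b_def by simp
  define C where "C = contract P (G, om, src) h"
  define G1 where "G1 = fst C"
  define o1 where "o1 = fst (snd C)"
  define s1 where "s1 = snd (snd C)"
  have Ceq: "C = (G1, o1, s1)" unfolding G1_def o1_def s1_def by simp
  have V1: "gV G1 = gV G - {b}" and H1: "gH G1 = gH G - {h, h'}"
    and vert1: "gvert G1 = (\<lambda>x. if gvert G x = b then a else gvert G x)" and opp1: "gopp G1 = gopp G"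
    and str1: "gstr G1 = (\<lambda>v. if v = a then Gl (gstr G a) h (gstr G b) h' else gstr G v)"
    and srcs: "s1 = src - {h}"
    using contract_fields[where G=G and h=h and om=om and src=src] unfolding G1_def s1_def C_def a_def b_def h'_def by simp_all
  have aV: "a \<in> gV G" "b \<in> gV G" using e a_def b_def by auto
  have fin1: "finite (gV G1)" "finite (gH G1)" using f(1,2) V1 H1 by auto
  have gr1: "\<forall>x \<in> gH G1. gvert G1 x \<in> gV G1 \<and> gopp G1 x \<in> gH G1 \<and> gopp G1 x \<noteq> x \<and> gopp G1 (gopp G1 x) = x"
  proof
    fix x assume x: "x \<in> gH G1"
    then have x0: "x \<in> gH G" "x \<noteq> h" "x \<noteq> h'" using H1 by auto
    have fx: "gvert G x \<in> gV G \<and> gopp G x \<in> gH G \<and> gopp G x \<noteq> x \<and> gopp G (gopp G x) = x" using f(5)[OF x0(1)] .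
    have "gopp G x \<noteq> h" using fx x0 e h'_def by metis
    moreover have "gopp G x \<noteq> h'" using fx x0 e(5) h'_def by metis
    ultimately show "gvert G1 x \<in> gV G1 \<and> gopp G1 x \<in> gH G1 \<and> gopp G1 x \<noteq> x \<and> gopp G1 (gopp G1 x) = x"
      using fx V1 H1 vert1 opp1 ab' aV by auto
  qed
  have hb: "h \<notin> hedges_at G b" "h' \<notin> hedges_at G a" "h \<in> hedges_at G a" "h' \<in> hedges_at G b"
    using e ab' unfolding hedges_at_def a_def b_def h'_def by auto
  have vh: "gvert G h = a" "gvert G h' = b" using a_def b_def h'_def by auto
  have mw1: "\<forall>v \<in> gV G1. mating_wf P (hedges_at G1 v) (gstr G1 v)"
  proof
    fix v assume v: "v \<in> gV G1"
    show "mating_wf P (hedges_at G1 v) (gstr G1 v)"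
    proof (cases "v = a")
      case True
      have wa: "wfq (gstr G a)" "lab (gstr G a) = hedges_at G a" using f(7) aV by auto
      have wb: "wfq (gstr G b)" "lab (gstr G b) = hedges_at G b" using f(7) aV by auto
      have dj: "lab (gstr G a) \<inter> lab (gstr G b) = {}" using wa wb ab' unfolding hedges_at_def by auto
      have ha: "h \<in> lab (gstr G a)" "h' \<in> lab (gstr G b)" using wa wb hb by auto
      have g: "wfq (Gl (gstr G a) h (gstr G b) h')"
        "lab (Gl (gstr G a) h (gstr G b) h') = (lab (gstr G a) - {h}) \<union> (lab (gstr G b) - {h'})"
        using Gl_wf[OF wa(1) ha(1) wb(1) ha(2) dj] by auto
      have "hedges_at G1 a = (hedges_at G a - {h}) \<union> (hedges_at G b - {h'})"
      proof (rule set_eqI)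
        fix x
        show "x \<in> hedges_at G1 a \<longleftrightarrow> x \<in> (hedges_at G a - {h}) \<union> (hedges_at G b - {h'})"
          unfolding hedges_at_def H1 vert1 using vh ab' by auto
      qed
      then show ?thesis unfolding mwf_iff using g str1 True wa wb by simp
    next
      case False
      have vV: "v \<in> gV G" "v \<noteq> b" using v V1 by auto
      have "hedges_at G1 v = hedges_at G v"
      proof (rule set_eqI)
        fix x
        show "x \<in> hedges_at G1 v \<longleftrightarrow> x \<in> hedges_at G v"
          unfolding hedges_at_def H1 vert1 using vh False vV by auto
      qed
      then show ?thesis unfolding mwf_iff using str1 False f(7)[OF vV(1)] by simp
    qed
  qed
  have k1: "card (gV G1) = card (gV G) - 1" using V1 aV f(1) by simp
  have o1v: "\<And>v. v \<in> gV G1 \<Longrightarrow> o1 v = (if v = a then 1 else om v + 1 - ind01 (om a < om v) - ind01 (om b < om v))"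
    using contract_ord[OF og hs a_def b_def ab'] V1 unfolding o1_def C_def by auto
  have oab: "om a \<noteq> om b" using ord_inj[OF og aV ab'] .
  have ra: "1 \<le> om a" "om a \<le> card (gV G)" "1 \<le> om b" "om b \<le> card (gV G)" using ord_range[OF og] aV by auto
  have bij1: "bij_betw o1 (gV G1) {1..card (gV G1)}"
  proof (rule bij_by_card)
    show "inj_on o1 (gV G1)"
    proof
      fix v w assume v: "v \<in> gV G1" and w: "w \<in> gV G1" and eq: "o1 v = o1 w"
      show "v = w"
      proof (rule ccontr)
        assume vw: "v \<noteq> w"
        have vV: "v \<in> gV G" "v \<noteq> b" "w \<in> gV G" "w \<noteq> b" using v w V1 by auto
        have rv: "1 \<le> om v" "om v \<le> card (gV G)" "1 \<le> om w" "om w \<le> card (gV G)" using ord_range[OF og] vV by auto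
        consider "v = a" | "w = a" | "v \<noteq> a" "w \<noteq> a" by auto
        then show False
        proof cases
          case 1
          then have "w \<noteq> a" using vw by auto
          then have "om w \<noteq> om a" "om w \<noteq> om b" using ord_inj[OF og] vV aV by auto
          then show False using eq o1v[OF v] o1v[OF w] 1 shift_range[OF oab _ _ rv(3,4) ra] \<open>w \<noteq> a\<close> by auto
        next
          case 2
          then have "v \<noteq> a" using vw by auto
          then have "om v \<noteq> om a" "om v \<noteq> om b" using ord_inj[OF og] vV aV by auto
          then show False using eq o1v[OF v] o1v[OF w] 2 shift_range[OF oab _ _ rv(1,2) ra] \<open>v \<noteq> a\<close> by auto
        next
          case 3
          have n: "om v \<noteq> om a" "om v \<noteq> om b" "om w \<noteq> om a" "om w \<noteq> om b" "om v \<noteq> om w"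
            using ord_inj[OF og] vV aV 3 vw by auto
          show False
          proof (cases "om v < om w")
            case True
            then show False using shift_mono[OF oab n(1,2) n(3,4) True] eq o1v[OF v] o1v[OF w] 3 by auto
          next
            case False
            then have "om w < om v" using n(5) by auto
            then show False using shift_mono[OF oab n(3,4) n(1,2)] eq o1v[OF v] o1v[OF w] 3 by auto
          qed
        qed
      qed
    qed
    show "o1 ` gV G1 \<subseteq> {1..card (gV G1)}"
    proof
      fix i assume "i \<in> o1 ` gV G1"
      then obtain v where v: "v \<in> gV G1" "i = o1 v" by auto
      have vV: "v \<in> gV G" "v \<noteq> b" using v V1 by auto
      have kk: "2 \<le> card (gV G)" using ra oab by auto
      show "i \<in> {1..card (gV G1)}"
      proof (cases "v = a")
        case True then show ?thesis using v o1v k1 kk by auto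
      next
        case False
        then have "om v \<noteq> om a" "om v \<noteq> om b" using ord_inj[OF og] vV aV by auto
        then show ?thesis using v o1v[OF v(1)] False k1 shift_range[OF oab _ _ ord_range[OF og vV(1)] ra] by auto
      qed
    qed
  qed (use k1 in auto)
  have s1H: "s1 \<subseteq> gH G1" using srcs H1 f(4) e h'_def by auto
  have s1o: "\<forall>x \<in> gH G1. x \<in> s1 \<longleftrightarrow> gopp G1 x \<notin> s1"
  proof
    fix x assume x: "x \<in> gH G1"
    then have x0: "x \<in> gH G" "x \<noteq> h" "x \<noteq> h'" using H1 by auto
    have "gopp G x \<noteq> h" using f(5)[OF x0(1)] x0 e h'_def by metis
    then show "x \<in> s1 \<longleftrightarrow> gopp G1 x \<notin> s1" using f(6)[OF x0(1)] srcs opp1 x0 by auto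
  qed
  have q1: "is_qgraph P G1" unfolding is_qgraph_def by (intro conjI fin1 gr1 mw1)
  have "is_ograph P (G1, o1, s1)" unfolding is_ograph_def prod.case by (intro conjI q1 bij1 s1H s1o)
  then show ?thesis using Ceq C_def by simp
qed

end

definition csg :: "nat \<Rightarrow> nat \<Rightarrow> int" where
  "csg p q = (-1) ^ (p - 1 + ((if q < p then q + 1 else q) - 2))"
definition sh :: "nat \<Rightarrow> nat \<Rightarrow> nat \<Rightarrow> nat" where
  "sh pa pb x = x + 1 - ind01 (pa < x) - ind01 (pb < x)"
definition sgb :: "bool \<Rightarrow> int" where "sgb b = (if b then -1 else 1)"

lemma m1_split: "(-1::int) ^ n = (if even n then 1 else -1)"
  by (simp add: minus_one_power_iff)

lemma csg_alt: assumes "1 \<le> p" "1 \<le> q" "p \<noteq> q"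
  shows "csg p q = - ((-1) ^ p * (-1) ^ q * sgb (q < p))"
proof (cases "q < p")
  case True
  have e: "p - 1 + ((if q < p then q + 1 else q) - 2) + 2 = p + q" using True assms by auto
  have "(-1::int) ^ (p + q) = (-1) ^ (p - 1 + ((if q < p then q + 1 else q) - 2)) * (-1)^2"
    unfolding e[symmetric] power_add by simp
  then show ?thesis unfolding csg_def sgb_def using True by (simp add: power_add)
next
  case False
  then have qp: "p < q" using assms by auto
  have e: "p - 1 + ((if q < p then q + 1 else q) - 2) + 3 = p + q" using qp assms by auto
  have "(-1::int) ^ (p + q) = (-1) ^ (p - 1 + ((if q < p then q + 1 else q) - 2)) * (-1)^3"
    unfolding e[symmetric] power_add by simp
  then show ?thesis unfolding csg_def sgb_def using False by (simp add: power_add)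
qed

lemma sh_pow: assumes "x \<noteq> pa" "x \<noteq> pb" "pa \<noteq> pb" "1 \<le> pa" "1 \<le> pb" "1 \<le> x"
  shows "(-1::int) ^ (sh pa pb x) = - ((-1) ^ x * sgb (pa < x) * sgb (pb < x))"
proof -
  consider "pa < x" "pb < x" | "pa < x" "\<not> pb < x" | "\<not> pa < x" "pb < x" | "\<not> pa < x" "\<not> pb < x" by auto
  then show ?thesis
  proof cases
    case 1
    then have "sh pa pb x + 1 = x" using assms unfolding sh_def ind01_def by auto
    then have "(-1::int) ^ x = (-1) ^ (sh pa pb x) * (-1)" by (metis power_Suc2 Suc_eq_plus1)
    then show ?thesis using 1 unfolding sgb_def by simp
  next
    case 2
    then have "sh pa pb x = x" using assms unfolding sh_def ind01_def by auto
    then show ?thesis using 2 unfolding sgb_def by simp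
  next
    case 3
    then have "sh pa pb x = x" using assms unfolding sh_def ind01_def by auto
    then show ?thesis using 3 unfolding sgb_def by simp
  next
    case 4
    then have "sh pa pb x = x + 1" using assms unfolding sh_def ind01_def by auto
    then show ?thesis using 4 unfolding sgb_def by simp
  qed
qed

lemma sh_less: assumes "x \<noteq> pa" "x \<noteq> pb" "y \<noteq> pa" "y \<noteq> pb" "pa \<noteq> pb"
  shows "(sh pa pb x < sh pa pb y) = (x < y)"
  using assms unfolding sh_def ind01_def by auto

lemma sh_ge2: assumes "x \<noteq> pa" "x \<noteq> pb" "pa \<noteq> pb" "1 \<le> pa" "1 \<le> pb" "1 \<le> x"
  shows "2 \<le> sh pa pb x"
  using assms unfolding sh_def ind01_def by auto

lemma sgb_flip: "(x::nat) \<noteq> y \<Longrightarrow> sgb (y < x) = - sgb (x < y)"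
  unfolding sgb_def by auto

lemma sign_disj: assumes "distinct [pa,pb,pc,pd::nat]" "1 \<le> pa" "1 \<le> pb" "1 \<le> pc" "1 \<le> pd"
  shows "csg pc pd * csg (sh pc pd pa) (sh pc pd pb) = csg pa pb * csg (sh pa pb pc) (sh pa pb pd)"
proof -
  have d: "pa \<noteq> pb" "pa \<noteq> pc" "pa \<noteq> pd" "pb \<noteq> pc" "pb \<noteq> pd" "pc \<noteq> pd" using assms(1) by auto
  have "sh pc pd pa \<noteq> sh pc pd pb" "sh pa pb pc \<noteq> sh pa pb pd"
    using sh_less[of pa pc pd pb] sh_less[of pb pc pd pa] sh_less[of pc pa pb pd] sh_less[of pd pa pb pc] d
    by (metis less_irrefl linorder_neqE_nat)+
  then show ?thesis
    using d assms sh_ge2[of pa pc pd] sh_ge2[of pb pc pd] sh_ge2[of pc pa pb] sh_ge2[of pd pa pb]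
    apply (simp add: csg_alt sh_pow sh_less)
    apply (cases "pa < pb"; cases "pa < pc"; cases "pa < pd"; cases "pb < pc"; cases "pb < pd"; cases "pc < pd";
           simp add: sgb_def)
    done
qed

lemma sign_bc: assumes "distinct [pa,pb,pd::nat]" "1 \<le> pa" "1 \<le> pb" "1 \<le> pd"
  shows "csg pb pd * csg (sh pb pd pa) 1 = - (csg pa pb * csg 1 (sh pa pb pd))"
proof -
  have d: "pa \<noteq> pb" "pa \<noteq> pd" "pb \<noteq> pd" using assms(1) by auto
  show ?thesis
    using d assms sh_ge2[of pa pb pd] sh_ge2[of pd pa pb]
    apply (simp add: csg_alt sh_pow)
    apply (cases "pa < pb"; cases "pa < pd"; cases "pb < pd"; simp add: sgb_def)
    done
qed

lemma sign_bd: assumes "distinct [pa,pb,pc::nat]" "1 \<le> pa" "1 \<le> pb" "1 \<le> pc"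
  shows "csg pc pb * csg (sh pc pb pa) 1 = - (csg pa pb * csg (sh pa pb pc) 1)"
proof -
  have d: "pa \<noteq> pb" "pa \<noteq> pc" "pb \<noteq> pc" using assms(1) by auto
  show ?thesis
    using d assms sh_ge2[of pa pc pb] sh_ge2[of pc pa pb]
    apply (simp add: csg_alt sh_pow)
    apply (cases "pa < pb"; cases "pa < pc"; cases "pb < pc"; simp add: sgb_def)
    done
qed

lemma sign_ac: assumes "distinct [pa,pb,pd::nat]" "1 \<le> pa" "1 \<le> pb" "1 \<le> pd"
  shows "csg pa pd * csg 1 (sh pa pd pb) = - (csg pa pb * csg 1 (sh pa pb pd))"
proof -
  have d: "pa \<noteq> pb" "pa \<noteq> pd" "pb \<noteq> pd" using assms(1) by auto
  show ?thesis
    using d assms sh_ge2[of pb pa pd] sh_ge2[of pd pa pb]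
    apply (simp add: csg_alt sh_pow)
    apply (cases "pa < pb"; cases "pa < pd"; cases "pb < pd"; simp add: sgb_def)
    done
qed

lemma relspan_sum: assumes "finite A" "\<forall>a \<in> A. f a \<in> relspan P"
  shows "(\<lambda>g. \<Sum>a\<in>A. f a g) \<in> relspan P"
  using assms
proof (induction A rule: finite_induct)
  case empty
  then show ?case using relspan.zero by simp
next
  case (insert x F)
  have "(\<lambda>g. f x g + (\<Sum>a\<in>F. f a g)) \<in> relspan P"
    using relspan.add[of "f x" P "\<lambda>g. \<Sum>a\<in>F. f a g"] insert by auto
  then show ?case using insert by simp
qed

lemma bij_ren: assumes "a \<in> X" "c \<in> X" "a \<noteq> c"
  shows "bij_betw (ren c a) (X - {a}) (X - {c})"
  unfolding bij_betw_def inj_on_def ren_def using assms by (auto simp: image_def)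

context ROP begin

lemma pair_finish:
  assumes ogA: "is_ograph P (GA, oA, sA)" and ogB: "is_ograph P (GB, oB, sB)"
  and bij: "bij_betw \<phi> (gV GA) (gV GB)" and H: "gH GB = gH GA" and sr: "sB = sA"
  and vert: "\<forall>x \<in> gH GA. gvert GB x = \<phi> (gvert GA x)" and opp: "\<forall>x \<in> gH GA. gopp GB x = gopp GA x"
  and str: "\<forall>v \<in> gV GA. mate_eq P (gstr GA v) (gstr GB (\<phi> v))"
  and ord: "((\<forall>v\<in>gV GA. oB (\<phi> v) = oA v) \<and> t = - s) \<or>
            (2 \<le> card (gV GA) \<and> (\<forall>v\<in>gV GA. oB (\<phi> v) = (if oA v = 1 then 2 else if oA v = 2 then 1 else oA v)) \<and> t = s)"
  shows "(\<lambda>x. of_int s * ind (GA, oA, sA) x + of_int t * ind (GB, oB, sB) x) \<in> relspan P"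
proof -
  define k where "k = card (gV GA)"
  define F where "F = (\<lambda>i. oB (\<phi> (inv_into (gV GA) oA i)))"
  define eps where "eps = perm_sign k F * (-1) ^ card {h \<in> sA. id h \<notin> sB}"
  have c0: "card {h \<in> sA. id h \<notin> sB} = 0" using sr by simp
  note fA = og_facts[OF ogA]
  have inv: "inv_into (gV GA) oA i \<in> gV GA \<and> oA (inv_into (gV GA) oA i) = i" if i: "i \<in> {1..k}" for i
  proof -
    have "i \<in> oA ` gV GA" using fA(3) i unfolding k_def bij_betw_def by simp
    then show ?thesis by (simp add: inv_into_into f_inv_into_f)
  qed
  have eps_val: "(eps = 1 \<and> t = - s) \<or> (eps = -1 \<and> t = s)"
    using ord
  proof
    assume a: "(\<forall>v\<in>gV GA. oB (\<phi> v) = oA v) \<and> t = - s"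
    have "(\<lambda>i. if i \<in> {1..k} then F i else i) = id"
    proof
      fix i show "(if i \<in> {1..k} then F i else i) = id i"
        using inv[of i] a unfolding F_def by auto
    qed
    then have "perm_sign k F = 1" unfolding perm_sign_def by simp
    then show ?thesis using a c0 eps_def by simp
  next
    assume a: "2 \<le> card (gV GA) \<and> (\<forall>v\<in>gV GA. oB (\<phi> v) = (if oA v = 1 then 2 else if oA v = 2 then 1 else oA v)) \<and> t = s"
    have "(\<lambda>i. if i \<in> {1..k} then F i else i) = (\<lambda>i. if i \<in> {1..k} then (if i = 1 then 2 else if i = 2 then 1 else i) else i)"
    proof
      fix i show "(if i \<in> {1..k} then F i else i) = (if i \<in> {1..k} then (if i = 1 then 2 else if i = 2 then 1 else i) else i)"
        using inv[of i] a unfolding F_def by auto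
    qed
    then have "perm_sign k F = -1" unfolding perm_sign_def using sign_swap12 a k_def by simp
    then show ?thesis using a c0 eps_def by simp
  qed
  have relab: "mate_relab P id (gstr GA v) = gstr GA v" if v: "v \<in> gV GA" for v
  proof -
    have "wfq (gstr GA v)" using fA(7)[OF v] by simp
    then have "fst (gstr GA v) \<in> S" "snd (gstr GA v) \<in> S" unfolding wfq_def by auto
    then show ?thesis unfolding mate_relab_def using relab_id by (simp add: prod_eq_iff)
  qed
  have iso: "oiso P (GA, oA, sA) (GB, oB, sB) \<phi> id eps"
    unfolding oiso_def prod.case
  proof (intro conjI)
    show "bij_betw \<phi> (gV GA) (gV GB)" by (rule bij)
    show "bij_betw id (gH GA) (gH GB)" using H by simp
    show "\<forall>h\<in>gH GA. gvert GB (id h) = \<phi> (gvert GA h) \<and> gopp GB (id h) = id (gopp GA h)"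
      using vert opp by simp
    show "\<forall>v\<in>gV GA. mate_eq P (mate_relab P id (gstr GA v)) (gstr GB (\<phi> v))"
      using str relab by simp
    show "eps = perm_sign (card (gV GA)) (\<lambda>i. oB (\<phi> (inv_into (gV GA) oA i))) * (- 1) ^ card {h \<in> sA. id h \<notin> sB}"
      unfolding eps_def F_def k_def by simp
  qed
  have "(\<lambda>h. ind (GA, oA, sA) h - of_int eps * ind (GB, oB, sB) h) \<in> relspan P"
    by (rule relspan.gen[OF ogA ogB iso])
  then have r: "(\<lambda>g. of_int s * (ind (GA, oA, sA) g - of_int eps * ind (GB, oB, sB) g)) \<in> relspan P"
    by (rule relspan.smult)
  have "(\<lambda>g. of_int s * (ind (GA, oA, sA) g - of_int eps * ind (GB, oB, sB) g)) =
        (\<lambda>x. of_int s * ind (GA, oA, sA) x + of_int t * ind (GB, oB, sB) x)"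
    using eps_val by (auto simp: algebra_simps)
  then show ?thesis using r by simp
qed


lemma dc_fields:
  assumes og: "is_ograph P (G, om, src)" and h1: "h1 \<in> src" and h2: "h2 \<in> src" and ne: "h1 \<noteq> h2"
  and ab: "a = gvert G h1" "b = gvert G (gopp G h1)" "a \<noteq> b"
  and cd: "c = gvert G h2" "d = gvert G (gopp G h2)"
  and c1d1: "c1 = (if c = b then a else c)" "d1 = (if d = b then a else d)" "c1 \<noteq> d1"
  and A_def: "A = contract P (contract P (G, om, src) h1) h2"
  and S1_def: "S1 = (\<lambda>v. if v = a then Gl (gstr G a) h1 (gstr G b) (gopp G h1) else gstr G v)"
  and o1_def: "o1 = (\<lambda>v. if v = a then 1 else sh (om a) (om b) (om v))"
  shows "is_ograph P A"
   "gV (fst A) = gV G - {b} - {d1}"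
   "gH (fst A) = gH G - {h1, gopp G h1} - {h2, gopp G h2}"
   "gvert (fst A) = (\<lambda>x. if (if gvert G x = b then a else gvert G x) = d1 then c1 else (if gvert G x = b then a else gvert G x))"
   "gopp (fst A) = gopp G"
   "gstr (fst A) = (\<lambda>v. if v = c1 then Gl (S1 c1) h2 (S1 d1) (gopp G h2) else S1 v)"
   "\<forall>v \<in> gV G - {b} - {d1}. fst (snd A) v = (if v = c1 then 1 else o1 v + 1 - ind01 (o1 c1 < o1 v) - ind01 (o1 d1 < o1 v))"
   "snd (snd A) = src - {h1} - {h2}"
   "contract_sign (G, om, src) h1 * contract_sign (contract P (G, om, src) h1) h2 = csg (om a) (om b) * csg (o1 c1) (o1 d1)"
proof -
  define C1 where "C1 = contract P (G, om, src) h1"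
  define G1 where "G1 = fst C1"
  define om1 where "om1 = fst (snd C1)"
  define s1 where "s1 = snd (snd C1)"
  have C1eq: "C1 = (G1, om1, s1)" unfolding G1_def om1_def s1_def by simp
  note cf = contract_fields[where G=G and h=h1 and om=om and src=src]
  have V1: "gV G1 = gV G - {b}" and H1: "gH G1 = gH G - {h1, gopp G h1}"
    and vert1: "gvert G1 = (\<lambda>x. if gvert G x = b then a else gvert G x)" and opp1: "gopp G1 = gopp G"
    and str1: "gstr G1 = S1" and srcs: "s1 = src - {h1}"
    using cf unfolding G1_def s1_def C1_def ab S1_def by simp_all
  have og1: "is_ograph P (G1, om1, s1)" using contract_og[OF og h1] ab C1eq C1_def by simp
  have h2s1: "h2 \<in> s1" using srcs h2 ne by simp
  have c1v: "c1 = gvert G1 h2" and d1v: "d1 = gvert G1 (gopp G1 h2)" using vert1 opp1 cd c1d1 by simp_all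
  note e = edge_facts[OF og h1]
  have aV: "a \<in> gV G" "b \<in> gV G" using edge_facts[OF og h1] ab by auto
  have om1v: "om1 v = o1 v" if v: "v \<in> gV G" "v \<noteq> b" for v
    using contract_ord[OF og h1 ab v] unfolding om1_def C1_def o1_def sh_def by simp
  note cf2 = contract_fields[where G=G1 and h=h2 and om=om1 and src=s1]
  have Aeq: "A = contract P (G1, om1, s1) h2" unfolding A_def C1_def[symmetric] C1eq ..
  show "is_ograph P A" unfolding Aeq by (rule contract_og[OF og1 h2s1]) (use c1v d1v c1d1 in simp)
  have XV: "gV (fst A) = gV G1 - {d1}" unfolding Aeq d1v by (rule cf2(1))
  have XH: "gH (fst A) = gH G1 - {h2, gopp G1 h2}" unfolding Aeq by (rule cf2(2))
  have Xv: "gvert (fst A) = (\<lambda>x. if gvert G1 x = d1 then c1 else gvert G1 x)" unfolding Aeq c1v d1v by (rule cf2(3))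
  have Xo: "gopp (fst A) = gopp G1" unfolding Aeq by (rule cf2(4))
  have Xs: "gstr (fst A) = (\<lambda>v. if v = c1 then Gl (gstr G1 c1) h2 (gstr G1 d1) (gopp G1 h2) else gstr G1 v)"
    unfolding Aeq c1v d1v by (rule cf2(5))
  show "gV (fst A) = gV G - {b} - {d1}" using XV V1 by simp
  show "gH (fst A) = gH G - {h1, gopp G h1} - {h2, gopp G h2}" using XH H1 opp1 by simp
  show "gvert (fst A) = (\<lambda>x. if (if gvert G x = b then a else gvert G x) = d1 then c1 else (if gvert G x = b then a else gvert G x))"
    unfolding Xv vert1 by simp
  show "gopp (fst A) = gopp G" using Xo opp1 by simp
  show "gstr (fst A) = (\<lambda>v. if v = c1 then Gl (S1 c1) h2 (S1 d1) (gopp G h2) else S1 v)"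
    unfolding Xs str1 opp1 by simp
  have Xsr: "snd (snd A) = s1 - {h2}" unfolding Aeq by (rule cf2(7))
  show "snd (snd A) = src - {h1} - {h2}" using Xsr srcs by simp
  have cV: "c \<in> gV G" "d \<in> gV G" using edge_facts[OF og h2] cd by auto
  have c1V: "c1 \<in> gV G" "c1 \<noteq> b" "d1 \<in> gV G" "d1 \<noteq> b" using c1d1 cV aV ab by auto
  show "\<forall>v \<in> gV G - {b} - {d1}. fst (snd A) v = (if v = c1 then 1 else o1 v + 1 - ind01 (o1 c1 < o1 v) - ind01 (o1 d1 < o1 v))"
  proof
    fix v assume v: "v \<in> gV G - {b} - {d1}"
    have v1: "v \<in> gV G1" "v \<noteq> d1" using v V1 by auto
    have "fst (snd A) v = (if v = c1 then 1 else om1 v + 1 - ind01 (om1 c1 < om1 v) - ind01 (om1 d1 < om1 v))"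
      unfolding Aeq by (rule contract_ord[OF og1 h2s1 c1v d1v c1d1(3) v1])
    then show "fst (snd A) v = (if v = c1 then 1 else o1 v + 1 - ind01 (o1 c1 < o1 v) - ind01 (o1 d1 < o1 v))"
      using om1v[of v] om1v[of c1] om1v[of d1] v c1V by simp
  qed
  have s1v: "contract_sign (G, om, src) h1 = csg (om a) (om b)"
    using contract_sign_val[OF og h1 ab] unfolding csg_def by simp
  have s2v: "contract_sign (G1, om1, s1) h2 = csg (om1 c1) (om1 d1)"
    using contract_sign_val[OF og1 h2s1 c1v d1v c1d1(3)] unfolding csg_def by simp
  show "contract_sign (G, om, src) h1 * contract_sign (contract P (G, om, src) h1) h2 = csg (om a) (om b) * csg (o1 c1) (o1 d1)"
    using s1v s2v om1v[of c1] om1v[of d1] c1V unfolding C1_def[symmetric] C1eq by simp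
qed

end

lemma r3: assumes "distinct [pa,pb,pd,pv::nat]" "1 \<le> pa" "1 \<le> pb" "1 \<le> pd" "1 \<le> pv"
  shows "sh pa pb pv + 1 - ind01 (1 < sh pa pb pv) - ind01 (sh pa pb pd < sh pa pb pv) =
         pv + 1 - ind01 (pa < pv) - ind01 (pb < pv) - ind01 (pd < pv)"
proof -
  have l: "(sh pa pb pd < sh pa pb pv) = (pd < pv)" using sh_less[of pd pa pb pv] assms by auto
  have g: "2 \<le> sh pa pb pv" using sh_ge2[of pv pa pb] assms by auto
  show ?thesis unfolding l using g assms
    by (cases "pa < pv"; cases "pb < pv"; cases "pd < pv"; simp add: sh_def ind01_def)
qed

lemma r3': assumes "distinct [pa,pb,pd,pv::nat]" "1 \<le> pa" "1 \<le> pb" "1 \<le> pd" "1 \<le> pv"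
  shows "sh pa pb pv + 1 - ind01 (sh pa pb pd < sh pa pb pv) - ind01 (1 < sh pa pb pv) =
         pv + 1 - ind01 (pa < pv) - ind01 (pb < pv) - ind01 (pd < pv)"
  using r3[OF assms] by (simp add: diff_commute)

lemma r4: assumes "distinct [pa,pb,pc,pd,pv::nat]" "1 \<le> pa" "1 \<le> pb" "1 \<le> pc" "1 \<le> pd" "1 \<le> pv"
  shows "sh pa pb pv + 1 - ind01 (sh pa pb pc < sh pa pb pv) - ind01 (sh pa pb pd < sh pa pb pv) =
         sh pc pd pv + 1 - ind01 (sh pc pd pa < sh pc pd pv) - ind01 (sh pc pd pb < sh pc pd pv)"
proof -
  have l: "(sh pa pb pc < sh pa pb pv) = (pc < pv)" "(sh pa pb pd < sh pa pb pv) = (pd < pv)"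
    "(sh pc pd pa < sh pc pd pv) = (pa < pv)" "(sh pc pd pb < sh pc pd pv) = (pb < pv)"
    using sh_less[of pc pa pb pv] sh_less[of pd pa pb pv] sh_less[of pa pc pd pv] sh_less[of pb pc pd pv] assms by auto
  show ?thesis unfolding l using assms
    by (cases "pa < pv"; cases "pb < pv"; cases "pc < pv"; cases "pd < pv"; simp add: sh_def ind01_def)
qed

lemma hedges_disj: "v \<noteq> w \<Longrightarrow> hedges_at G v \<inter> hedges_at G w = {}"
  unfolding hedges_at_def by auto

locale PC = ROP P for P :: "('l, 'o) opd" +
  fixes G :: "('v, 'l, 'o) qgraph" and om :: "'v \<Rightarrow> nat" and src :: "'l set" and h1 h2 :: 'l
  assumes og: "is_ograph P (G, om, src)" and h1: "h1 \<in> src" and h2: "h2 \<in> src" and ne: "h1 \<noteq> h2"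
    and nl1: "gvert G h1 \<noteq> gvert G (gopp G h1)" and nl2: "gvert G h2 \<noteq> gvert G (gopp G h2)"
    and np: "{gvert G h1, gvert G (gopp G h1)} \<noteq> {gvert G h2, gvert G (gopp G h2)}"
begin

abbreviation "a \<equiv> gvert G h1"
abbreviation "b \<equiv> gvert G (gopp G h1)"
abbreviation "c \<equiv> gvert G h2"
abbreviation "d \<equiv> gvert G (gopp G h2)"
abbreviation "g \<equiv> (G, om, src)"
abbreviation "A \<equiv> contract P (contract P g h1) h2"
abbreviation "B \<equiv> contract P (contract P g h2) h1"
abbreviation "cA \<equiv> contract_sign g h1 * contract_sign (contract P g h1) h2"
abbreviation "cB \<equiv> contract_sign g h2 * contract_sign (contract P g h2) h1"
abbreviation "q \<equiv> gstr G"

lemma basic: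
  shows "a \<in> gV G" "b \<in> gV G" "c \<in> gV G" "d \<in> gV G"
    "h1 \<in> hedges_at G a" "gopp G h1 \<in> hedges_at G b" "h2 \<in> hedges_at G c" "gopp G h2 \<in> hedges_at G d"
    "gopp G h1 \<noteq> h2" "gopp G h2 \<noteq> h1" "gopp G h1 \<noteq> gopp G h2"
    "\<And>v. v \<in> gV G \<Longrightarrow> wfq (q v) \<and> lab (q v) = hedges_at G v"
    "\<And>v. v \<in> gV G \<Longrightarrow> 1 \<le> om v"
    "\<And>v w. v \<in> gV G \<Longrightarrow> w \<in> gV G \<Longrightarrow> v \<noteq> w \<Longrightarrow> om v \<noteq> om w"
proof -
  note e1 = edge_facts[OF og h1] and e2 = edge_facts[OF og h2]
  show "a \<in> gV G" "b \<in> gV G" "c \<in> gV G" "d \<in> gV G" using e1 e2 by auto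
  show "h1 \<in> hedges_at G a" "gopp G h1 \<in> hedges_at G b" "h2 \<in> hedges_at G c" "gopp G h2 \<in> hedges_at G d"
    using e1 e2 by auto
  show "gopp G h1 \<noteq> h2" using e1(3) h2 by auto
  show "gopp G h2 \<noteq> h1" using e2(3) h1 by auto
  show "gopp G h1 \<noteq> gopp G h2" using e1(5) e2(5) ne by metis
  show "\<And>v. v \<in> gV G \<Longrightarrow> wfq (q v) \<and> lab (q v) = hedges_at G v" using og_facts(7)[OF og] by auto
  show "\<And>v. v \<in> gV G \<Longrightarrow> 1 \<le> om v" using ord_range[OF og] by auto
  show "\<And>v w. v \<in> gV G \<Longrightarrow> w \<in> gV G \<Longrightarrow> v \<noteq> w \<Longrightarrow> om v \<noteq> om w" using ord_inj[OF og] by auto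
qed

lemmas FA = dc_fields[OF og h1 h2 ne refl refl nl1 refl refl refl refl _ refl refl refl]
lemmas FB = dc_fields[OF og h2 h1 ne[symmetric] refl refl nl2 refl refl refl refl _ refl refl refl]

lemma Aeq: "A = (fst A, fst (snd A), snd (snd A))" by simp
lemma Beq: "B = (fst B, fst (snd B), snd (snd B))" by simp

lemma pair_bc: assumes cb: "c = b"
  shows "(\<lambda>x. of_int cA * ind A x + of_int cB * ind B x) \<in> relspan P"
proof -
  note bs = basic
  have bd: "d \<noteq> b" using nl2 cb by simp
  have ad: "a \<noteq> d" using np cb by auto
  have ab: "a \<noteq> b" using nl1 by simp
  have pr: "om a \<noteq> om b" "om a \<noteq> om d" "om b \<noteq> om d" "1 \<le> om a" "1 \<le> om b" "1 \<le> om d"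
    using bs(1-4,13,14) ab ad bd by auto
  have cA1: "(if c = b then a else c) \<noteq> (if d = b then a else d)" using cb ad bd by simp
  have cB1: "(if a = d then c else a) \<noteq> (if b = d then c else b)" using ad bd ab by auto
  note fa = FA[OF cA1] and fb = FB[OF cB1]
  have ogA: "is_ograph P (fst A, fst (snd A), snd (snd A))" using fa(1) by simp
  have ogB: "is_ograph P (fst B, fst (snd B), snd (snd B))" using fb(1) by simp
  have VA: "gV (fst A) = gV G - {b} - {d}" using fa(2) bd by simp
  have VB: "gV (fst B) = gV G - {b} - {d}" using fb(2) bd ad by auto
  have HAB: "gH (fst B) = gH (fst A)" using fa(3) fb(3) by auto
  have SAB: "snd (snd B) = snd (snd A)" using fa(8) fb(8) by auto
  have vert: "\<forall>x \<in> gH (fst A). gvert (fst B) x = id (gvert (fst A) x)"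
    using fa(4) fb(4) cb bd ad ab by auto
  have opp: "\<forall>x \<in> gH (fst A). gopp (fst B) x = gopp (fst A) x" using fa(5) fb(5) by simp
  have str: "\<forall>v \<in> gV (fst A). mate_eq P (gstr (fst A) v) (gstr (fst B) (id v))"
  proof
    fix v assume v: "v \<in> gV (fst A)"
    show "mate_eq P (gstr (fst A) v) (gstr (fst B) (id v))"
    proof (cases "v = a")
      case True
      have sA: "gstr (fst A) v = Gl (Gl (q a) h1 (q b) (gopp G h1)) h2 (q d) (gopp G h2)"
        using fa(6) True cb ad bd by simp
      have sB: "gstr (fst B) v = Gl (q a) h1 (Gl (q b) h2 (q d) (gopp G h2)) (gopp G h1)"
        using fb(6) True cb ad bd ab by simp
      have w: "wfq (q a)" "wfq (q b)" "wfq (q d)" "lab (q a) = hedges_at G a" "lab (q b) = hedges_at G b"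
        "lab (q d) = hedges_at G d" using bs(12) bs(1-4) by auto
      have "mate_eq P (Gl (Gl (q a) h1 (q b) (gopp G h1)) h2 (q d) (gopp G h2)) (Gl (q a) h1 (Gl (q b) h2 (q d) (gopp G h2)) (gopp G h1))"
        apply (rule Gl_assoc)
        using w hedges_disj[OF ab, where G=G] hedges_disj[OF ad, where G=G] hedges_disj[OF bd[symmetric], where G=G] bs(5-9) cb
        by (auto simp: Int_commute)
      then show ?thesis using sA sB by simp
    next
      case False
      have vv: "v \<noteq> b" "v \<noteq> d" using v VA by auto
      have "gstr (fst A) v = q v" using fa(6) False vv cb by simp
      moreover have "gstr (fst B) v = q v" using fb(6) False vv cb by simp
      ultimately show ?thesis using meq_refl by simp
    qed
  qed
  have ordr: "(\<forall>v\<in>gV (fst A). fst (snd B) (id v) = fst (snd A) v) \<and> cB = - cA"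
  proof
    show "\<forall>v\<in>gV (fst A). fst (snd B) (id v) = fst (snd A) v"
    proof
      fix v assume v: "v \<in> gV (fst A)"
      have vV: "v \<in> gV G" "v \<noteq> b" "v \<noteq> d" using v VA by auto
      have oA: "fst (snd A) v = (if v = a then 1 else (if v = a then 1 else sh (om a) (om b) (om v)) + 1 - ind01 (1 < (if v = a then 1 else sh (om a) (om b) (om v))) - ind01 (sh (om a) (om b) (om d) < (if v = a then 1 else sh (om a) (om b) (om v))))"
        using fa(7) v VA cb ad bd by simp
      have oB: "fst (snd B) v = (if v = a then 1 else (if v = b then 1 else sh (om b) (om d) (om v)) + 1 - ind01 (sh (om b) (om d) (om a) < (if v = b then 1 else sh (om b) (om d) (om v))) - ind01 (1 < (if v = b then 1 else sh (om b) (om d) (om v))))"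
        using fb(7) v VA VB cb ad bd ab by simp
      show "fst (snd B) (id v) = fst (snd A) v"
      proof (cases "v = a")
        case True then show ?thesis using oA oB by simp
      next
        case False
        have pv: "om v \<noteq> om a" "om v \<noteq> om b" "om v \<noteq> om d" "1 \<le> om v" using bs(13,14) vV False bs(1-4) by auto
        have e1: "fst (snd A) v = om v + 1 - ind01 (om a < om v) - ind01 (om b < om v) - ind01 (om d < om v)"
          using oA False r3[of "om a" "om b" "om d" "om v"] pr pv by simp
        have e2: "fst (snd B) v = om v + 1 - ind01 (om b < om v) - ind01 (om d < om v) - ind01 (om a < om v)"
          using oB False vV r3'[of "om b" "om d" "om a" "om v"] pr pv by simp
        show ?thesis using e1 e2 by simp
      qed
    qed
    have sA: "cA = csg (om a) (om b) * csg 1 (sh (om a) (om b) (om d))" using fa(9) cb ad bd by simp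
    have sB: "cB = csg (om b) (om d) * csg (sh (om b) (om d) (om a)) 1" using fb(9) cb ad bd ab by simp
    show "cB = - cA" using sA sB sign_bc[of "om a" "om b" "om d"] pr by simp
  qed
  have bij: "bij_betw id (gV (fst A)) (gV (fst B))" using VA VB by simp
  have "(\<lambda>x. of_int cA * ind (fst A, fst (snd A), snd (snd A)) x + of_int cB * ind (fst B, fst (snd B), snd (snd B)) x) \<in> relspan P"
    by (rule pair_finish[OF ogA ogB bij HAB SAB vert opp str]) (use ordr in blast)
  then show ?thesis by simp
qed


lemma pair_bd: assumes db: "d = b"
  shows "(\<lambda>x. of_int cA * ind A x + of_int cB * ind B x) \<in> relspan P"
proof -
  note bs = basic
  have cb: "c \<noteq> b" using nl2 db by simp
  have ac: "a \<noteq> c" using np db by auto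
  have ab: "a \<noteq> b" using nl1 by simp
  have pr: "om a \<noteq> om b" "om a \<noteq> om c" "om b \<noteq> om c" "1 \<le> om a" "1 \<le> om b" "1 \<le> om c"
    using bs(1-4,13,14) ab ac cb by auto
  have cA1: "(if c = b then a else c) \<noteq> (if d = b then a else d)" using cb ac db by auto
  have cB1: "(if a = d then c else a) \<noteq> (if b = d then c else b)" using ab ac db by auto
  note fa = FA[OF cA1] and fb = FB[OF cB1]
  have ogA: "is_ograph P (fst A, fst (snd A), snd (snd A))" using fa(1) by simp
  have ogB: "is_ograph P (fst B, fst (snd B), snd (snd B))" using fb(1) by simp
  have VA: "gV (fst A) = (gV G - {b}) - {a}" using fa(2) db by simp
  have VB: "gV (fst B) = (gV G - {b}) - {c}" using fb(2) db ab by auto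
  have HAB: "gH (fst B) = gH (fst A)" using fa(3) fb(3) by auto
  have SAB: "snd (snd B) = snd (snd A)" using fa(8) fb(8) by auto
  have vert: "\<forall>x \<in> gH (fst A). gvert (fst B) x = ren c a (gvert (fst A) x)"
    using fa(4) fb(4) db cb ac ab unfolding ren_def by auto
  have opp: "\<forall>x \<in> gH (fst A). gopp (fst B) x = gopp (fst A) x" using fa(5) fb(5) by simp
  have w: "wfq (q a)" "wfq (q b)" "wfq (q c)" "lab (q a) = hedges_at G a" "lab (q b) = hedges_at G b"
    "lab (q c) = hedges_at G c" using bs(12) bs(1-4) by auto
  have dj: "lab (q a) \<inter> lab (q b) = {}" "lab (q a) \<inter> lab (q c) = {}" "lab (q b) \<inter> lab (q c) = {}"
    "lab (q c) \<inter> lab (q b) = {}"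
    using w hedges_disj[OF ab, where G=G] hedges_disj[OF ac, where G=G] hedges_disj[OF cb[symmetric], where G=G]
    by (auto simp: Int_commute)
  have str: "\<forall>v \<in> gV (fst A). mate_eq P (gstr (fst A) v) (gstr (fst B) (ren c a v))"
  proof
    fix v assume v: "v \<in> gV (fst A)"
    show "mate_eq P (gstr (fst A) v) (gstr (fst B) (ren c a v))"
    proof (cases "v = c")
      case True
      define X where "X = Gl (q a) h1 (q b) (gopp G h1)"
      have sA: "gstr (fst A) v = Gl (q c) h2 X (gopp G h2)"
        using fa(6) True cb ac db unfolding X_def by simp
      have sB: "gstr (fst B) (ren c a v) = Gl (q a) h1 (Gl (q c) h2 (q b) (gopp G h2)) (gopp G h1)"
        using fb(6) True cb ac db ab unfolding ren_def by simp
      have m: "h1 \<in> lab (q a)" "gopp G h1 \<in> lab (q b)" "h2 \<in> lab (q c)" "gopp G h2 \<in> lab (q b)"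
        using w bs(5-8) db by auto
      have wX: "wfq X" "lab X = (lab (q a) - {h1}) \<union> (lab (q b) - {gopp G h1})"
        using Gl_wf[OF w(1) m(1) w(2) m(2) dj(1)] unfolding X_def by auto
      have h2X: "gopp G h2 \<in> lab X" using wX m bs(11) by auto
      have djX: "lab (q c) \<inter> lab X = {}" using wX dj by auto
      have e1: "mate_eq P (Gl (q c) h2 X (gopp G h2)) (Gl X (gopp G h2) (q c) h2)"
        by (rule Gl_sym[OF w(3) m(3) wX(1) h2X djX])
      have e2: "mate_eq P (Gl X (gopp G h2) (q c) h2) (Gl (q a) h1 (Gl (q b) (gopp G h2) (q c) h2) (gopp G h1))"
        unfolding X_def apply (rule Gl_assoc)
        using w m dj bs(11) by (auto simp: Int_commute)
      have wbc: "wfq (Gl (q b) (gopp G h2) (q c) h2)"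
        "lab (Gl (q b) (gopp G h2) (q c) h2) = (lab (q b) - {gopp G h2}) \<union> (lab (q c) - {h2})"
        using Gl_wf[OF w(2) m(4) w(3) m(3) dj(3)] by auto
      have e3: "mate_eq P (Gl (q b) (gopp G h2) (q c) h2) (Gl (q c) h2 (q b) (gopp G h2))"
        by (rule Gl_sym[OF w(2) m(4) w(3) m(3) dj(3)])
      have h1bc: "gopp G h1 \<in> lab (Gl (q b) (gopp G h2) (q c) h2)" using wbc m bs(11) by auto
      have e4: "Gl (q a) h1 (Gl (q b) (gopp G h2) (q c) h2) (gopp G h1) = Gl (q a) h1 (Gl (q c) h2 (q b) (gopp G h2)) (gopp G h1)"
        by (rule Gl_cong2[OF e3 wbc(1) h1bc])
      have "mate_eq P (gstr (fst A) v) (Gl (q a) h1 (Gl (q b) (gopp G h2) (q c) h2) (gopp G h1))"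
        using meq_trans[OF e1 e2] sA by simp
      then show ?thesis using e4 sB by simp
    next
      case False
      have vv: "v \<noteq> b" "v \<noteq> a" using v VA by auto
      have "gstr (fst A) v = q v" using fa(6) False vv cb db by simp
      moreover have "gstr (fst B) (ren c a v) = q v" using fb(6) False vv cb db unfolding ren_def by simp
      ultimately show ?thesis using meq_refl by simp
    qed
  qed
  have ordr: "(\<forall>v\<in>gV (fst A). fst (snd B) (ren c a v) = fst (snd A) v) \<and> cB = - cA"
  proof
    show "\<forall>v\<in>gV (fst A). fst (snd B) (ren c a v) = fst (snd A) v"
    proof
      fix v assume v: "v \<in> gV (fst A)"
      have vV: "v \<in> gV G" "v \<noteq> b" "v \<noteq> a" using v VA by auto
      show "fst (snd B) (ren c a v) = fst (snd A) v"
      proof (cases "v = c")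
        case True
        have "fst (snd A) v = 1" using fa(7) v VA True cb db by simp
        moreover have "fst (snd B) (ren c a v) = 1" using fb(7) True VB ab ac db bs(1) unfolding ren_def by simp
        ultimately show ?thesis by simp
      next
        case False
        have pv: "om v \<noteq> om a" "om v \<noteq> om b" "om v \<noteq> om c" "1 \<le> om v" using bs(13,14) vV False bs(1-4) by auto
        have oA: "fst (snd A) v = sh (om a) (om b) (om v) + 1 - ind01 (sh (om a) (om b) (om c) < sh (om a) (om b) (om v)) - ind01 (1 < sh (om a) (om b) (om v))"
          using fa(7) v VA cb db False vV ac[symmetric] by simp
        have oB: "fst (snd B) (ren c a v) = sh (om c) (om b) (om v) + 1 - ind01 (sh (om c) (om b) (om a) < sh (om c) (om b) (om v)) - ind01 (1 < sh (om c) (om b) (om v))"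
          using fb(7) v VB cb db False vV ac ac[symmetric] ab unfolding ren_def by simp
        have e1: "fst (snd A) v = om v + 1 - ind01 (om a < om v) - ind01 (om b < om v) - ind01 (om c < om v)"
          using oA r3'[of "om a" "om b" "om c" "om v"] pr pv by simp
        have e2: "fst (snd B) (ren c a v) = om v + 1 - ind01 (om c < om v) - ind01 (om b < om v) - ind01 (om a < om v)"
          using oB r3'[of "om c" "om b" "om a" "om v"] pr pv by simp
        show ?thesis using e1 e2 by (simp add: diff_commute)
      qed
    qed
    have sA: "cA = csg (om a) (om b) * csg (sh (om a) (om b) (om c)) 1" using fa(9) cb db ac by simp
    have sB: "cB = csg (om c) (om b) * csg (sh (om c) (om b) (om a)) 1" using fb(9) cb db ac ab by simp
    show "cB = - cA" using sA sB sign_bd[of "om a" "om b" "om c"] pr by simp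
  qed
  have bij: "bij_betw (ren c a) (gV (fst A)) (gV (fst B))" unfolding VA VB
    by (rule bij_ren) (use bs(1,3) ab cb ac in auto)
  have "(\<lambda>x. of_int cA * ind (fst A, fst (snd A), snd (snd A)) x + of_int cB * ind (fst B, fst (snd B), snd (snd B)) x) \<in> relspan P"
    by (rule pair_finish[OF ogA ogB bij HAB SAB vert opp str]) (use ordr in blast)
  then show ?thesis by simp
qed


lemma pair_ac: assumes ca: "c = a"
  shows "(\<lambda>x. of_int cA * ind A x + of_int cB * ind B x) \<in> relspan P"
proof -
  note bs = basic
  have ab: "a \<noteq> b" using nl1 by simp
  have db: "d \<noteq> b" using np ca by auto
  have ad: "a \<noteq> d" using nl2 ca by simp
  have pr: "om a \<noteq> om b" "om a \<noteq> om d" "om b \<noteq> om d" "1 \<le> om a" "1 \<le> om b" "1 \<le> om d"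
    using bs(1-4,13,14) ab ad db by auto
  have cA1: "(if c = b then a else c) \<noteq> (if d = b then a else d)" using ca ab ad db by auto
  have cB1: "(if a = d then c else a) \<noteq> (if b = d then c else b)" using ab ad db by auto
  note fa = FA[OF cA1] and fb = FB[OF cB1]
  have ogA: "is_ograph P (fst A, fst (snd A), snd (snd A))" using fa(1) by simp
  have ogB: "is_ograph P (fst B, fst (snd B), snd (snd B))" using fb(1) by simp
  have VA: "gV (fst A) = gV G - {b} - {d}" using fa(2) db by simp
  have VB: "gV (fst B) = gV G - {b} - {d}" using fb(2) db by auto
  have HAB: "gH (fst B) = gH (fst A)" using fa(3) fb(3) by auto
  have SAB: "snd (snd B) = snd (snd A)" using fa(8) fb(8) by auto
  have vert: "\<forall>x \<in> gH (fst A). gvert (fst B) x = id (gvert (fst A) x)"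
    using fa(4) fb(4) ca db ad ab by auto
  have opp: "\<forall>x \<in> gH (fst A). gopp (fst B) x = gopp (fst A) x" using fa(5) fb(5) by simp
  have w: "wfq (q a)" "wfq (q b)" "wfq (q d)" "lab (q a) = hedges_at G a" "lab (q b) = hedges_at G b"
    "lab (q d) = hedges_at G d" using bs(12) bs(1-4) by auto
  have dj: "lab (q a) \<inter> lab (q b) = {}" "lab (q a) \<inter> lab (q d) = {}" "lab (q b) \<inter> lab (q d) = {}"
    "lab (q b) \<inter> lab (q a) = {}"
    using w hedges_disj[OF ab, where G=G] hedges_disj[OF ad, where G=G] hedges_disj[OF db[symmetric], where G=G]
    by (auto simp: Int_commute)
  have str: "\<forall>v \<in> gV (fst A). mate_eq P (gstr (fst A) v) (gstr (fst B) (id v))"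
  proof
    fix v assume v: "v \<in> gV (fst A)"
    show "mate_eq P (gstr (fst A) v) (gstr (fst B) (id v))"
    proof (cases "v = a")
      case True
      have sA: "gstr (fst A) v = Gl (Gl (q a) h1 (q b) (gopp G h1)) h2 (q d) (gopp G h2)"
        using fa(6) True ca ab ad db by simp
      have sB: "gstr (fst B) (id v) = Gl (Gl (q a) h2 (q d) (gopp G h2)) h1 (q b) (gopp G h1)"
        using fb(6) True ca ab ad db by simp
      have m: "h1 \<in> lab (q a)" "gopp G h1 \<in> lab (q b)" "h2 \<in> lab (q a)" "gopp G h2 \<in> lab (q d)"
        using w bs(5-8) ca by auto
      have e0: "mate_eq P (Gl (q a) h1 (q b) (gopp G h1)) (Gl (q b) (gopp G h1) (q a) h1)"
        by (rule Gl_sym[OF w(1) m(1) w(2) m(2) dj(1)])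
      have wab: "wfq (Gl (q a) h1 (q b) (gopp G h1))"
        "lab (Gl (q a) h1 (q b) (gopp G h1)) = (lab (q a) - {h1}) \<union> (lab (q b) - {gopp G h1})"
        using Gl_wf[OF w(1) m(1) w(2) m(2) dj(1)] by auto
      have h2ab: "h2 \<in> lab (Gl (q a) h1 (q b) (gopp G h1))" using wab m ne by auto
      have e1: "Gl (Gl (q a) h1 (q b) (gopp G h1)) h2 (q d) (gopp G h2) = Gl (Gl (q b) (gopp G h1) (q a) h1) h2 (q d) (gopp G h2)"
        by (rule Gl_cong1[OF e0 wab(1) h2ab])
      have e2: "mate_eq P (Gl (Gl (q b) (gopp G h1) (q a) h1) h2 (q d) (gopp G h2)) (Gl (q b) (gopp G h1) (Gl (q a) h2 (q d) (gopp G h2)) h1)"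
        apply (rule Gl_assoc) using w m dj ne by (auto simp: Int_commute)
      have wad: "wfq (Gl (q a) h2 (q d) (gopp G h2))"
        "lab (Gl (q a) h2 (q d) (gopp G h2)) = (lab (q a) - {h2}) \<union> (lab (q d) - {gopp G h2})"
        using Gl_wf[OF w(1) m(3) w(3) m(4) dj(2)] by auto
      have h1ad: "h1 \<in> lab (Gl (q a) h2 (q d) (gopp G h2))" using wad m ne by auto
      have djad: "lab (q b) \<inter> lab (Gl (q a) h2 (q d) (gopp G h2)) = {}" using wad dj by auto
      have e3: "mate_eq P (Gl (q b) (gopp G h1) (Gl (q a) h2 (q d) (gopp G h2)) h1) (Gl (Gl (q a) h2 (q d) (gopp G h2)) h1 (q b) (gopp G h1))"
        by (rule Gl_sym[OF w(2) m(2) wad(1) h1ad djad])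
      have "mate_eq P (gstr (fst A) v) (Gl (Gl (q a) h2 (q d) (gopp G h2)) h1 (q b) (gopp G h1))"
        using meq_trans[OF e2 e3] sA e1 by simp
      then show ?thesis using sB by simp
    next
      case False
      have vv: "v \<noteq> b" "v \<noteq> d" using v VA by auto
      have "gstr (fst A) v = q v" using fa(6) False vv ca ab by simp
      moreover have "gstr (fst B) (id v) = q v" using fb(6) False vv ca by simp
      ultimately show ?thesis using meq_refl by simp
    qed
  qed
  have ordr: "(\<forall>v\<in>gV (fst A). fst (snd B) (id v) = fst (snd A) v) \<and> cB = - cA"
  proof
    show "\<forall>v\<in>gV (fst A). fst (snd B) (id v) = fst (snd A) v"
    proof
      fix v assume v: "v \<in> gV (fst A)"
      have vV: "v \<in> gV G" "v \<noteq> b" "v \<noteq> d" using v VA by auto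
      show "fst (snd B) (id v) = fst (snd A) v"
      proof (cases "v = a")
        case True
        have "fst (snd A) v = 1" using fa(7) v VA True ca ab db by simp
        moreover have "fst (snd B) (id v) = 1" using fb(7) True v VA VB ab ad db by simp
        ultimately show ?thesis by simp
      next
        case False
        have pv: "om v \<noteq> om a" "om v \<noteq> om b" "om v \<noteq> om d" "1 \<le> om v" using bs(13,14) vV False bs(1-4) by auto
        have oA: "fst (snd A) v = sh (om a) (om b) (om v) + 1 - ind01 (1 < sh (om a) (om b) (om v)) - ind01 (sh (om a) (om b) (om d) < sh (om a) (om b) (om v))"
          using fa(7) v VA ca ab db ad[symmetric] False vV by simp
        have oB: "fst (snd B) (id v) = sh (om a) (om d) (om v) + 1 - ind01 (1 < sh (om a) (om d) (om v)) - ind01 (sh (om a) (om d) (om b) < sh (om a) (om d) (om v))"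
          using fb(7) v VA VB ca db ab ab[symmetric] ad False vV by simp
        have e1: "fst (snd A) v = om v + 1 - ind01 (om a < om v) - ind01 (om b < om v) - ind01 (om d < om v)"
          using oA r3[of "om a" "om b" "om d" "om v"] pr pv by simp
        have e2: "fst (snd B) (id v) = om v + 1 - ind01 (om a < om v) - ind01 (om d < om v) - ind01 (om b < om v)"
          using oB r3[of "om a" "om d" "om b" "om v"] pr pv by simp
        show ?thesis using e1 e2 by (simp add: diff_commute)
      qed
    qed
    have sA: "cA = csg (om a) (om b) * csg 1 (sh (om a) (om b) (om d))" using fa(9) ca ab db ad by simp
    have sB: "cB = csg (om a) (om d) * csg 1 (sh (om a) (om d) (om b))" using fb(9) ca ab db ad by simp
    show "cB = - cA" using sA sB sign_ac[of "om a" "om b" "om d"] pr by simp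
  qed
  have bij: "bij_betw id (gV (fst A)) (gV (fst B))" using VA VB by simp
  have "(\<lambda>x. of_int cA * ind (fst A, fst (snd A), snd (snd A)) x + of_int cB * ind (fst B, fst (snd B), snd (snd B)) x) \<in> relspan P"
    by (rule pair_finish[OF ogA ogB bij HAB SAB vert opp str]) (use ordr in blast)
  then show ?thesis by simp
qed

lemma pair_disj: assumes dj4: "a \<noteq> c" "a \<noteq> d" "b \<noteq> c" "b \<noteq> d"
  shows "(\<lambda>x. of_int cA * ind A x + of_int cB * ind B x) \<in> relspan P"
proof -
  note bs = basic
  have ab: "a \<noteq> b" using nl1 by simp
  have cd: "c \<noteq> d" using nl2 by simp
  have pr: "distinct [om a, om b, om c, om d]" "1 \<le> om a" "1 \<le> om b" "1 \<le> om c" "1 \<le> om d"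
    using bs(1-4,13,14) ab cd dj4 by auto
  have cA1: "(if c = b then a else c) \<noteq> (if d = b then a else d)" using dj4 cd by auto
  have cB1: "(if a = d then c else a) \<noteq> (if b = d then c else b)" using ab dj4 by auto
  note fa = FA[OF cA1] and fb = FB[OF cB1]
  have ogA: "is_ograph P (fst A, fst (snd A), snd (snd A))" using fa(1) by simp
  have ogB: "is_ograph P (fst B, fst (snd B), snd (snd B))" using fb(1) by simp
  have VA: "gV (fst A) = gV G - {b} - {d}" using fa(2) dj4 by simp
  have VB: "gV (fst B) = gV G - {b} - {d}" using fb(2) dj4 by auto
  have HAB: "gH (fst B) = gH (fst A)" using fa(3) fb(3) by auto
  have SAB: "snd (snd B) = snd (snd A)" using fa(8) fb(8) by auto
  have vert: "\<forall>x \<in> gH (fst A). gvert (fst B) x = id (gvert (fst A) x)"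
    using fa(4) fb(4) dj4 ab cd by auto
  have opp: "\<forall>x \<in> gH (fst A). gopp (fst B) x = gopp (fst A) x" using fa(5) fb(5) by simp
  have str: "\<forall>v \<in> gV (fst A). mate_eq P (gstr (fst A) v) (gstr (fst B) (id v))"
  proof
    fix v assume v: "v \<in> gV (fst A)"
    have "gstr (fst A) v = gstr (fst B) v"
      using fa(6) fb(6) dj4 dj4[symmetric] ab cd by simp
    then show "mate_eq P (gstr (fst A) v) (gstr (fst B) (id v))" using meq_refl by simp
  qed
  have ordr: "2 \<le> card (gV (fst A)) \<and> (\<forall>v\<in>gV (fst A). fst (snd B) (id v) = (if fst (snd A) v = 1 then 2 else if fst (snd A) v = 2 then 1 else fst (snd A) v)) \<and> cB = cA"
  proof (intro conjI)
    have aA: "a \<in> gV (fst A)" "c \<in> gV (fst A)" using VA bs(1,3) ab dj4 cd by auto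
    have finA: "finite (gV (fst A))" using og_facts(1)[OF ogA] .
    have "{a, c} \<subseteq> gV (fst A)" using aA by auto
    then have "card {a, c} \<le> card (gV (fst A))" using finA card_mono by blast
    then show "2 \<le> card (gV (fst A))" using dj4 by simp
    have oAc: "fst (snd A) c = 1" using fa(7) aA VA dj4 by simp
    have oAa: "fst (snd A) a = 2" using fa(7) aA VA dj4 sh_ge2[of "om c" "om a" "om b"] sh_ge2[of "om d" "om a" "om b"] pr
      by (simp add: ind01_def)
    have oBa: "fst (snd B) a = 1" using fb(7) aA VA VB dj4 by simp
    have oBc: "fst (snd B) c = 2" using fb(7) aA VA VB dj4 sh_ge2[of "om a" "om c" "om d"] sh_ge2[of "om b" "om c" "om d"] pr
      by (simp add: ind01_def)
    have injA: "inj_on (fst (snd A)) (gV (fst A))" using og_facts(3)[OF ogA] bij_betw_def by auto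
    show "\<forall>v\<in>gV (fst A). fst (snd B) (id v) = (if fst (snd A) v = 1 then 2 else if fst (snd A) v = 2 then 1 else fst (snd A) v)"
    proof
      fix v assume v: "v \<in> gV (fst A)"
      show "fst (snd B) (id v) = (if fst (snd A) v = 1 then 2 else if fst (snd A) v = 2 then 1 else fst (snd A) v)"
      proof (cases "v = a \<or> v = c")
        case True then show ?thesis using oAc oAa oBa oBc dj4 by auto
      next
        case False
        have vV: "v \<in> gV G" "v \<noteq> b" "v \<noteq> d" "v \<noteq> a" "v \<noteq> c" using v VA False by auto
        have n12: "fst (snd A) v \<noteq> 1" "fst (snd A) v \<noteq> 2"
          using injA v aA oAc oAa vV inj_on_eq_iff by metis+
        have pv: "distinct [om a, om b, om c, om d, om v]" "1 \<le> om v" using bs(13,14) vV bs(1-4) pr by auto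
        have oA: "fst (snd A) v = sh (om a) (om b) (om v) + 1 - ind01 (sh (om a) (om b) (om c) < sh (om a) (om b) (om v)) - ind01 (sh (om a) (om b) (om d) < sh (om a) (om b) (om v))"
          using fa(7) v VA dj4 vV by simp
        have oB: "fst (snd B) (id v) = sh (om c) (om d) (om v) + 1 - ind01 (sh (om c) (om d) (om a) < sh (om c) (om d) (om v)) - ind01 (sh (om c) (om d) (om b) < sh (om c) (om d) (om v))"
          using fb(7) v VA VB dj4 vV by simp
        show ?thesis using oA oB r4[OF pv(1) pr(2-5) pv(2)] n12 by simp
      qed
    qed
    have sA: "cA = csg (om a) (om b) * csg (sh (om a) (om b) (om c)) (sh (om a) (om b) (om d))" using fa(9) dj4 by simp
    have sB: "cB = csg (om c) (om d) * csg (sh (om c) (om d) (om a)) (sh (om c) (om d) (om b))" using fb(9) dj4 by simp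
    show "cB = cA" using sA sB sign_disj[OF pr] by simp
  qed
  have bij: "bij_betw id (gV (fst A)) (gV (fst B))" using VA VB by simp
  have "(\<lambda>x. of_int cA * ind (fst A, fst (snd A), snd (snd A)) x + of_int cB * ind (fst B, fst (snd B), snd (snd B)) x) \<in> relspan P"
    by (rule pair_finish[OF ogA ogB bij HAB SAB vert opp str]) (use ordr in blast)
  then show ?thesis by simp
qed


lemma pair_main: assumes "a \<noteq> d"
  shows "(\<lambda>x. of_int cA * ind A x + of_int cB * ind B x) \<in> relspan P"
proof (cases "c = b")
  case True then show ?thesis by (rule pair_bc)
next
  case cb: False
  show ?thesis
  proof (cases "d = b")
    case True then show ?thesis by (rule pair_bd)
  next
    case db: False
    show ?thesis
    proof (cases "c = a")
      case True then show ?thesis by (rule pair_ac)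
    next
      case False
      show ?thesis by (rule pair_disj) (use False cb db assms in auto)
    qed
  qed
qed

end

context ROP begin

lemma pair_sym:
  assumes og: "is_ograph P (G, om, src)" and h1: "h1 \<in> src" and h2: "h2 \<in> src" and ne: "h1 \<noteq> h2"
    and nl1: "gvert G h1 \<noteq> gvert G (gopp G h1)" and nl2: "gvert G h2 \<noteq> gvert G (gopp G h2)"
    and np: "{gvert G h1, gvert G (gopp G h1)} \<noteq> {gvert G h2, gvert G (gopp G h2)}"
  shows "(\<lambda>x. of_int (contract_sign (G, om, src) h1 * contract_sign (contract P (G, om, src) h1) h2) *
                ind (contract P (contract P (G, om, src) h1) h2) x +
              of_int (contract_sign (G, om, src) h2 * contract_sign (contract P (G, om, src) h2) h1) *
                ind (contract P (contract P (G, om, src) h2) h1) x) \<in> relspan P"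
proof -
  have R: "ROP P" using infl opd rvs by (rule ROP.intro)
  show ?thesis
  proof (cases "gvert G h1 = gvert G (gopp G h2)")
    case False
    have pc: "PC P G om src h1 h2" by (intro PC.intro[OF R] PC_axioms.intro og h1 h2 ne nl1 nl2 np)
    show ?thesis by (rule PC.pair_main[OF pc False])
  next
    case True
    have np': "{gvert G h2, gvert G (gopp G h2)} \<noteq> {gvert G h1, gvert G (gopp G h1)}" using np by auto
    have pc: "PC P G om src h2 h1" by (intro PC.intro[OF R] PC_axioms.intro og h1 h2 ne[symmetric] nl1 nl2 np')
    have "gvert G h2 \<noteq> gvert G (gopp G h1)" using True np nl2 by auto
    then have "(\<lambda>x. of_int (contract_sign (G, om, src) h2 * contract_sign (contract P (G, om, src) h2) h1) *
                ind (contract P (contract P (G, om, src) h2) h1) x +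
              of_int (contract_sign (G, om, src) h1 * contract_sign (contract P (G, om, src) h1) h2) *
                ind (contract P (contract P (G, om, src) h1) h2) x) \<in> relspan P"
      by (rule PC.pair_main[OF pc])
    then show ?thesis by (simp add: add.commute)
  qed
qed

end

lemma dE_ind: "dE P (ind g) = dE_gen P g"
proof -
  have s: "{x. ind g x \<noteq> 0} = {g}" unfolding ind_def by auto
  show ?thesis unfolding dE_def s by (simp add: ind_def)
qed

lemma dE_gen_alt: "dE_gen P (G, om, src) = (\<lambda>g'. \<Sum>h\<in>{h \<in> src. gvert G h \<noteq> gvert G (gopp G h)}.
    of_int (contract_sign (G, om, src) h) * ind (contract P (G, om, src) h) g')"
  unfolding dE_gen_def ind_def by (auto intro!: sum.cong)

context ROP begin

lemma E1_char: assumes og: "is_ograph P (G, om, src)"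
  shows "{h2 \<in> snd (snd (contract P (G, om, src) h)). gvert (fst (contract P (G, om, src) h)) h2 \<noteq>
           gvert (fst (contract P (G, om, src) h)) (gopp (fst (contract P (G, om, src) h)) h2)} =
         {h2 \<in> src - {h}. (if gvert G h2 = gvert G (gopp G h) then gvert G h else gvert G h2) \<noteq>
                          (if gvert G (gopp G h2) = gvert G (gopp G h) then gvert G h else gvert G (gopp G h2))}"
  using contract_fields[where G=G and h=h and om=om and src=src] by simp

lemma main_rel: assumes og: "is_ograph P g" shows "dE P (dE P (ind g)) \<in> relspan P"
proof -
  obtain G om src where g: "g = (G, om, src)" by (cases g) auto
  note ogg = og[unfolded g]
  note f = og_facts[OF ogg]
  define E where "E = {h \<in> src. gvert G h \<noteq> gvert G (gopp G h)}"
  define C where "C = (\<lambda>h. contract P g h)"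
  define cs where "cs = (\<lambda>h. contract_sign g h)"
  define E1 where "E1 = (\<lambda>h. {h2 \<in> snd (snd (C h)). gvert (fst (C h)) h2 \<noteq> gvert (fst (C h)) (gopp (fst (C h)) h2)})"
  define T where "T = (\<lambda>p x. of_int (cs (fst p) * contract_sign (C (fst p)) (snd p)) * ind (contract P (C (fst p)) (snd p)) x)"
  define Pi where "Pi = Sigma E E1"
  have finsrc: "finite src" using f(2,4) finite_subset by auto
  have finE: "finite E" unfolding E_def using finsrc by simp
  have finE1: "finite (E1 h)" for h
  proof -
    have "E1 h \<subseteq> src" unfolding E1_def C_def g using contract_fields[where G=G and h=h and om=om and src=src] by auto
    then show ?thesis using finsrc finite_subset by auto
  qed
  have finPi: "finite Pi" unfolding Pi_def using finE finE1 by auto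
  have d1: "dE P (ind g) = (\<lambda>g'. \<Sum>h\<in>E. of_int (cs h) * ind (C h) g')"
    unfolding dE_ind g dE_gen_alt E_def cs_def C_def g ..
  have dC: "dE_gen P (C h) = (\<lambda>g''. \<Sum>h2\<in>E1 h. of_int (contract_sign (C h) h2) * ind (contract P (C h) h2) g'')" for h
  proof -
    obtain G1 o1 s1 where c: "C h = (G1, o1, s1)" by (cases "C h") auto
    show ?thesis unfolding c E1_def by (simp add: dE_gen_alt)
  qed
  have step: "dE P (dE P (ind g)) x = (\<Sum>p\<in>Pi. T p x)" for x
  proof -
    define X where "X = dE P (ind g)"
    have supp: "{g'. X g' \<noteq> 0} \<subseteq> C ` E"
    proof
      fix g' assume "g' \<in> {g'. X g' \<noteq> 0}"
      then have "(\<Sum>h\<in>E. of_int (cs h) * ind (C h) g') \<noteq> 0" unfolding X_def d1 by simp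
      then have "\<exists>h\<in>E. of_int (cs h) * ind (C h) g' \<noteq> (0::rat)"
      proof (rule contrapos_np)
        assume "\<not> (\<exists>h\<in>E. of_int (cs h) * ind (C h) g' \<noteq> (0::rat))"
        then have "\<forall>h\<in>E. of_int (cs h) * ind (C h) g' = (0::rat)" by blast
        then show "(\<Sum>h\<in>E. of_int (cs h) * ind (C h) g') = 0" by (rule sum.neutral)
      qed
      then obtain h where "h \<in> E" "of_int (cs h) * ind (C h) g' \<noteq> (0::rat)" by blast
      then show "g' \<in> C ` E" unfolding ind_def by (auto split: if_splits)
    qed
    have "dE P X x = (\<Sum>g'\<in>{g'. X g' \<noteq> 0}. X g' * dE_gen P g' x)" unfolding dE_def ..
    also have "\<dots> = (\<Sum>g'\<in>C ` E. X g' * dE_gen P g' x)"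
      by (rule sum.mono_neutral_left) (use supp finE in auto)
    also have "\<dots> = (\<Sum>g'\<in>C ` E. \<Sum>h\<in>E. of_int (cs h) * (ind (C h) g' * dE_gen P g' x))"
      unfolding X_def d1 by (simp add: sum_distrib_right mult.assoc)
    also have "\<dots> = (\<Sum>h\<in>E. \<Sum>g'\<in>C ` E. of_int (cs h) * (ind (C h) g' * dE_gen P g' x))"
      by (rule sum.swap)
    also have "\<dots> = (\<Sum>h\<in>E. of_int (cs h) * dE_gen P (C h) x)"
    proof (rule sum.cong[OF refl])
      fix h assume h: "h \<in> E"
      have "(\<Sum>g'\<in>C ` E. of_int (cs h) * (ind (C h) g' * dE_gen P g' x)) =
            of_int (cs h) * (\<Sum>g'\<in>C ` E. (if g' = C h then dE_gen P g' x else 0))"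
        unfolding sum_distrib_left ind_def by (auto intro!: sum.cong)
      also have "(\<Sum>g'\<in>C ` E. (if g' = C h then dE_gen P g' x else 0)) = dE_gen P (C h) x"
        using h finE by (simp add: sum.delta)
      finally show "(\<Sum>g'\<in>C ` E. of_int (cs h) * (ind (C h) g' * dE_gen P g' x)) = of_int (cs h) * dE_gen P (C h) x" .
    qed
    also have "\<dots> = (\<Sum>h\<in>E. \<Sum>h2\<in>E1 h. T (h, h2) x)"
      unfolding dC T_def by (simp add: sum_distrib_left mult.assoc)
    also have "\<dots> = (\<Sum>(h, h2)\<in>Sigma E E1. T (h, h2) x)"
      by (rule sum.Sigma[OF finE]) (use finE1 in auto)
    also have "\<dots> = (\<Sum>p\<in>Pi. T p x)" unfolding Pi_def by (rule sum.cong) auto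
    finally show ?thesis unfolding X_def .
  qed
  have Pi_char: "p \<in> Pi \<longleftrightarrow> fst p \<in> src \<and> snd p \<in> src \<and> fst p \<noteq> snd p \<and>
       gvert G (fst p) \<noteq> gvert G (gopp G (fst p)) \<and>
       (if gvert G (snd p) = gvert G (gopp G (fst p)) then gvert G (fst p) else gvert G (snd p)) \<noteq>
       (if gvert G (gopp G (snd p)) = gvert G (gopp G (fst p)) then gvert G (fst p) else gvert G (gopp G (snd p)))" for p
  proof -
    obtain h h2 where p: "p = (h, h2)" by (cases p)
    have "E1 h = {h2 \<in> src - {h}. (if gvert G h2 = gvert G (gopp G h) then gvert G h else gvert G h2) \<noteq>
                          (if gvert G (gopp G h2) = gvert G (gopp G h) then gvert G h else gvert G (gopp G h2))}"
      unfolding E1_def C_def g by (rule E1_char[OF ogg])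
    then show ?thesis unfolding Pi_def p E_def by auto
  qed
  have Pi_props: "fst p \<in> src \<and> snd p \<in> src \<and> fst p \<noteq> snd p \<and> gvert G (fst p) \<noteq> gvert G (gopp G (fst p)) \<and>
      gvert G (snd p) \<noteq> gvert G (gopp G (snd p)) \<and>
      {gvert G (fst p), gvert G (gopp G (fst p))} \<noteq> {gvert G (snd p), gvert G (gopp G (snd p))}" if p: "p \<in> Pi" for p
    using Pi_char[of p] p by (auto simp: doubleton_eq_iff split: if_splits)
  have Pi_swap: "prod.swap p \<in> Pi" if p: "p \<in> Pi" for p
  proof -
    obtain h1 h2 where pp: "p = (h1, h2)" by (cases p)
    define a where "a = gvert G h1"
    define b where "b = gvert G (gopp G h1)"
    define c where "c = gvert G h2"
    define d where "d = gvert G (gopp G h2)"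
    have pr: "h1 \<in> src" "h2 \<in> src" "h1 \<noteq> h2" "a \<noteq> b" "c \<noteq> d" "{a, b} \<noteq> {c, d}"
      using Pi_props[OF p] pp unfolding a_def b_def c_def d_def by auto
    have key: "(if a = d then c else a) \<noteq> (if b = d then c else b)"
    proof (cases "a = d")
      case True
      then have "b \<noteq> d" "c \<noteq> b" using pr by auto
      then show ?thesis using True by simp
    next
      case False
      show ?thesis
      proof (cases "b = d")
        case True
        then have "c \<noteq> a" using pr by auto
        then show ?thesis using True False by simp
      next
        case False2: False
        then show ?thesis using False pr by simp
      qed
    qed
    have "prod.swap p = (h2, h1)" using pp by simp
    moreover have "(h2, h1) \<in> Pi" unfolding Pi_char fst_conv snd_conv
      using pr key unfolding a_def b_def c_def d_def by simp
    ultimately show ?thesis by simp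
  qed
  have swapPi: "prod.swap ` Pi = Pi"
  proof
    show "prod.swap ` Pi \<subseteq> Pi" using Pi_swap by auto
    show "Pi \<subseteq> prod.swap ` Pi"
    proof
      fix p assume "p \<in> Pi"
      then have "prod.swap p \<in> Pi" by (rule Pi_swap)
      then show "p \<in> prod.swap ` Pi" by (metis image_eqI swap_swap)
    qed
  qed
  have sw: "(\<Sum>p\<in>Pi. T (prod.swap p) x) = (\<Sum>p\<in>Pi. T p x)" for x
  proof -
    have "(\<Sum>p\<in>Pi. T p x) = (\<Sum>p\<in>prod.swap ` Pi. T p x)" using swapPi by simp
    also have "\<dots> = (\<Sum>p\<in>Pi. T (prod.swap p) x)"
    proof -
      have inj: "inj_on prod.swap Pi" by (rule inj_onI) (metis swap_swap)
      show ?thesis using sum.reindex[OF inj, of "\<lambda>p. T p x"] by (simp add: comp_def)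
    qed
    finally show ?thesis by simp
  qed
  have pairs: "(\<lambda>x. T p x + T (prod.swap p) x) \<in> relspan P" if p: "p \<in> Pi" for p
  proof -
    obtain h1 h2 where pp: "p = (h1, h2)" by (cases p)
    have pr: "h1 \<in> src" "h2 \<in> src" "h1 \<noteq> h2" "gvert G h1 \<noteq> gvert G (gopp G h1)" "gvert G h2 \<noteq> gvert G (gopp G h2)"
      "{gvert G h1, gvert G (gopp G h1)} \<noteq> {gvert G h2, gvert G (gopp G h2)}" using Pi_props[OF p] pp by auto
    show ?thesis using pair_sym[OF ogg pr] unfolding T_def pp cs_def C_def g by simp
  qed
  have "(\<lambda>x. \<Sum>p\<in>Pi. T p x + T (prod.swap p) x) \<in> relspan P"
    by (rule relspan_sum[OF finPi]) (use pairs in auto)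
  then have "(\<lambda>x. (1/2) * (\<Sum>p\<in>Pi. T p x + T (prod.swap p) x)) \<in> relspan P"
    by (rule relspan.smult)
  moreover have "(\<lambda>x. (1/2) * (\<Sum>p\<in>Pi. T p x + T (prod.swap p) x)) = dE P (dE P (ind g))"
  proof
    fix x
    have "(\<Sum>p\<in>Pi. T p x + T (prod.swap p) x) = 2 * (\<Sum>p\<in>Pi. T p x)"
      using sw[of x] by (simp add: sum.distrib)
    then show "(1/2) * (\<Sum>p\<in>Pi. T p x + T (prod.swap p) x) = dE P (dE P (ind g)) x"
      using step[of x] by simp
  qed
  ultimately show ?thesis by simp
qed

end

theorem lemma8p1:
  fixes P :: "('l, 'o) opd" and g :: "('v, 'l, 'o) ograph"
  assumes "infinite (UNIV :: 'l set)"
    and "operad_on_sets P"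
    and "reversible P"
    and "is_ograph P g"
  shows "dE P (dE P (ind g)) \<in> relspan P"
proof -
  have "ROP P" using assms(1-3) by (rule ROP.intro)
  then show ?thesis using ROP.main_rel assms(4) by blast
qed

end
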